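(* Let $A[1..n]$ be an array with entries from an alphabet $\Sigma$. One can construct a data structure occupying $O(n\lg|\Sigma|)$ bits that answers in constant time the query $\mathrm{rank}(k)$ = the number of indices $i\le k$ with $A[i]=A[k]$, for any $1\le k\le n$.
   Context: Model: word RAM with words of $\Theta(\lg n)$ bits (at least $\lg n$ bits), unit-cost word operations. *)

theory Defs
  imports Complex_Main
begin

text \<open>The data structure is a read-only memory,
  a list of w-bit words; its space in bits is (number of words) * w.\<close>

datatype instr =
    IConst nat nat
  | IAdd nat nat nat
  | ISub nat nat nat
  | IMul nat nat nat
  | IDiv nat nat nat
  | IMod nat nat nat
  | IShl nat nat nat
  | IShr nat nat nat
  | IAnd nat nat nat
  | IOr nat nat nat
  | IXor nat nat nat
  | ILess nat nat nat
  | ILoad nat nat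
  | IJz nat nat
  | IHalt

type_synonym state = "nat \<times> (nat \<Rightarrow> nat)"

definition wrap :: "nat \<Rightarrow> int \<Rightarrow> nat" where
  "wrap w x = nat (x mod 2 ^ w)"

fun exec_instr :: "nat \<Rightarrow> nat list \<Rightarrow> instr \<Rightarrow> state \<Rightarrow> state" where
  "exec_instr w m (IConst r v) (pc, R) = (pc + 1, R(r := v mod 2 ^ w))"
| "exec_instr w m (IAdd r a b) (pc, R) = (pc + 1, R(r := (R a + R b) mod 2 ^ w))"
| "exec_instr w m (ISub r a b) (pc, R) = (pc + 1, R(r := wrap w (int (R a) - int (R b))))"
| "exec_instr w m (IMul r a b) (pc, R) = (pc + 1, R(r := (R a * R b) mod 2 ^ w))"
| "exec_instr w m (IDiv r a b) (pc, R) = (pc + 1, R(r := R a div R b))"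
| "exec_instr w m (IMod r a b) (pc, R) = (pc + 1, R(r := R a mod R b))"
| "exec_instr w m (IShl r a b) (pc, R) = (pc + 1, R(r := (R a * 2 ^ R b) mod 2 ^ w))"
| "exec_instr w m (IShr r a b) (pc, R) = (pc + 1, R(r := R a div 2 ^ R b))"
| "exec_instr w m (IAnd r a b) (pc, R) = (pc + 1, R(r := and (R a) (R b)))"
| "exec_instr w m (IOr r a b) (pc, R) = (pc + 1, R(r := or (R a) (R b)))"
| "exec_instr w m (IXor r a b) (pc, R) = (pc + 1, R(r := xor (R a) (R b)))"
| "exec_instr w m (ILess r a b) (pc, R) = (pc + 1, R(r := (if R a < R b then 1 else 0)))"
| "exec_instr w m (ILoad r a) (pc, R) = (pc + 1, R(r := (if R a < length m then m ! R a else 0)))"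
| "exec_instr w m (IJz r t) (pc, R) = ((if R r = 0 then t else pc + 1), R)"
| "exec_instr w m IHalt s = s"

definition halted :: "instr list \<Rightarrow> state \<Rightarrow> bool" where
  "halted P s \<longleftrightarrow> fst s < length P \<and> P ! fst s = IHalt"

definition step :: "nat \<Rightarrow> nat list \<Rightarrow> instr list \<Rightarrow> state \<Rightarrow> state" where
  "step w m P s = (if fst s < length P then exec_instr w m (P ! fst s) s else s)"

definition run :: "nat \<Rightarrow> nat list \<Rightarrow> instr list \<Rightarrow> nat \<Rightarrow> state \<Rightarrow> state" where
  "run w m P t s = (step w m P ^^ t) s"

definition answers_within :: "nat \<Rightarrow> nat list \<Rightarrow> instr list \<Rightarrow> nat \<Rightarrow> nat \<Rightarrow> nat \<Rightarrow> bool" where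
  "answers_within w m P c x y \<longleftrightarrow>
     (\<exists>t\<le>c. halted P (run w m P t (0, (\<lambda>_. 0)(0 := x)))
            \<and> snd (run w m P t (0, (\<lambda>_. 0)(0 := x))) 0 = y)"

definition arank :: "(nat \<Rightarrow> nat) \<Rightarrow> nat \<Rightarrow> nat" where
  "arank A k = card {i. 1 \<le> i \<and> i \<le> k \<and> A i = A k}"

end

theory Submission
  imports Defs "HOL-Library.Log_Nat"
begin

definition Pr :: "instr list" where
"Pr = [ILoad 1 9, IJz 1 59, IConst 2 1, ISub 3 0 2, ILoad 4 2, IDiv 5 3 4, IMod 6 3 4,
 IConst 7 2, ILoad 7 7, IAdd 7 7 5, ILoad 8 7, IMul 10 8 4, IAdd 10 10 6,
 IConst 7 3, ILoad 7 7, IAdd 7 7 10, ILoad 11 7,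
 IConst 7 4, ILoad 7 7, IAdd 7 7 10, ILoad 12 7,
 IConst 7 5, ILoad 13 7, IDiv 14 12 13, IMod 15 12 13,
 IConst 7 6, ILoad 16 7, IMul 16 5 16, IAdd 16 16 14,
 IConst 7 7, ILoad 7 7, IAdd 16 16 7, ILoad 17 16,
 IConst 7 8, ILoad 7 7, IMul 15 15 7, IShr 17 17 15,
 IConst 7 9, ILoad 7 7, IMod 17 17 7,
 IConst 7 10, ILoad 7 7, IMul 18 6 7, IShr 18 8 18,
 IConst 7 11, ILoad 19 7, IMod 18 18 19,
 IConst 7 12, ILoad 7 7, IShr 20 5 7, IMul 20 20 19, IAdd 20 20 18,
 IConst 7 13, ILoad 7 7, IAdd 20 20 7, ILoad 20 20,
 IAdd 0 20 17, IAdd 0 0 11, IHalt,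
 ILoad 0 0, IHalt]"

lemma Pr_nth:
  "Pr ! 0 = ILoad 1 9"
  "Pr ! 1 = IJz 1 59"
  "Pr ! 2 = IConst 2 1"
  "Pr ! 3 = ISub 3 0 2"
  "Pr ! 4 = ILoad 4 2"
  "Pr ! 5 = IDiv 5 3 4"
  "Pr ! 6 = IMod 6 3 4"
  "Pr ! 7 = IConst 7 2"
  "Pr ! 8 = ILoad 7 7"
  "Pr ! 9 = IAdd 7 7 5"
  "Pr ! 10 = ILoad 8 7"
  "Pr ! 11 = IMul 10 8 4"
  "Pr ! 12 = IAdd 10 10 6"
  "Pr ! 13 = IConst 7 3"
  "Pr ! 14 = ILoad 7 7"
  "Pr ! 15 = IAdd 7 7 10"
  "Pr ! 16 = ILoad 11 7"
  "Pr ! 17 = IConst 7 4"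
  "Pr ! 18 = ILoad 7 7"
  "Pr ! 19 = IAdd 7 7 10"
  "Pr ! 20 = ILoad 12 7"
  "Pr ! 21 = IConst 7 5"
  "Pr ! 22 = ILoad 13 7"
  "Pr ! 23 = IDiv 14 12 13"
  "Pr ! 24 = IMod 15 12 13"
  "Pr ! 25 = IConst 7 6"
  "Pr ! 26 = ILoad 16 7"
  "Pr ! 27 = IMul 16 5 16"
  "Pr ! 28 = IAdd 16 16 14"
  "Pr ! 29 = IConst 7 7"
  "Pr ! 30 = ILoad 7 7"
  "Pr ! 31 = IAdd 16 16 7"
  "Pr ! 32 = ILoad 17 16"
  "Pr ! 33 = IConst 7 8"
  "Pr ! 34 = ILoad 7 7"
  "Pr ! 35 = IMul 15 15 7"
  "Pr ! 36 = IShr 17 17 15"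
  "Pr ! 37 = IConst 7 9"
  "Pr ! 38 = ILoad 7 7"
  "Pr ! 39 = IMod 17 17 7"
  "Pr ! 40 = IConst 7 10"
  "Pr ! 41 = ILoad 7 7"
  "Pr ! 42 = IMul 18 6 7"
  "Pr ! 43 = IShr 18 8 18"
  "Pr ! 44 = IConst 7 11"
  "Pr ! 45 = ILoad 19 7"
  "Pr ! 46 = IMod 18 18 19"
  "Pr ! 47 = IConst 7 12"
  "Pr ! 48 = ILoad 7 7"
  "Pr ! 49 = IShr 20 5 7"
  "Pr ! 50 = IMul 20 20 19"
  "Pr ! 51 = IAdd 20 20 18"
  "Pr ! 52 = IConst 7 13"
  "Pr ! 53 = ILoad 7 7"
  "Pr ! 54 = IAdd 20 20 7"
  "Pr ! 55 = ILoad 20 20"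
  "Pr ! 56 = IAdd 0 20 17"
  "Pr ! 57 = IAdd 0 0 11"
  "Pr ! 58 = IHalt"
  "Pr ! 59 = ILoad 0 0"
  "Pr ! 60 = IHalt"
  "Pr ! Suc 0 = IJz 1 59"
  and Pr_len: "length Pr = 61"
  by (simp_all add: Pr_def)

lemma run_Suc: "run w m P (Suc t) s = run w m P t (step w m P s)"
  unfolding run_def funpow_Suc_right by simp

lemma run_num: "run w m P (numeral n) s = run w m P (pred_numeral n) (step w m P s)"
  by (subst numeral_eq_Suc) (rule run_Suc)

lemma run_0: "run w m P 0 s = s" by (simp add: run_def)

lemma prog_direct:
  assumes "m ! 0 = 0" "0 < length m" "k < length m"
  shows "answers_within w m Pr 60 k (m ! k)"
  unfolding answers_within_def
  apply (rule exI[of _ 3])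
  using assms by (simp add: numeral_eq_Suc run_Suc run_0 step_def Pr_def halted_def)


lemma wrap_sub1: "1 \<le> k \<Longrightarrow> wrap w (int k - 1) = (k - 1) mod 2^w"
proof -
  assume a: "1 \<le> k"
  have e1: "int k - 1 = int (k-1)" using a by linarith
  have e2: "int ((k-1) mod 2^w) = int (k-1) mod int (2^w)" by (rule of_nat_mod)
  have e3: "int (2^w) = (2::int)^w" by simp
  show ?thesis unfolding wrap_def e1 using e2 e3 by (metis nat_int)
qed

lemma prog_hier:
  fixes k w b bCW bT1 bT2 q G bBP f L e bSP p j pos c t loc idx ad bc a sa :: nat and m :: "nat list"
  assumes p_def: "p = k - 1"
  assumes j_def: "j = p div b"
  assumes pos_def: "pos = p mod b"
  assumes c_def: "c = m ! (bCW + j)"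
  assumes t_def: "t = c * b + pos"
  assumes loc_def: "loc = m ! (bT1 + t)"
  assumes idx_def: "idx = m ! (bT2 + t)"
  assumes ad_def: "ad = j * G + idx div q + bBP"
  assumes bc_def: "bc = m ! ad div 2 ^ (idx mod q * f) mod 2 ^ f"
  assumes a_def: "a = c div 2 ^ (pos * L) mod 2 ^ L"
  assumes sa_def: "sa = (j div 2 ^ e) * 2 ^ L + a + bSP"
  assumes k: "1 \<le> k" "k < 2^w" and w: "16 \<le> w"
  and hd: "m ! 0 = 1" "m!1 = b" "m!2 = bCW" "m!3 = bT1" "m!4 = bT2" "m!5 = q" "m!6 = G"
    "m!7 = bBP" "m!8 = f" "m!9 = 2^f" "m!10 = L" "m!11 = 2^L" "m!12 = e" "m!13 = bSP"
  and len: "14 \<le> length m" "bCW + j < length m" "bT1 + t < length m" "bT2 + t < length m"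
    "ad < length m" "sa < length m" "length m \<le> 2^w"
  and bnd: "m ! sa + bc + loc < 2^w" "idx mod q * f < 2^w" "pos * L < 2^w"
  shows "answers_within w m Pr 60 k (m ! sa + bc + loc)"
proof -
  have lt: "x < 2^w" if "x < length m" for x using that len by linarith
  have c16: "(16::nat) \<le> 2^w"
  proof -
    have "(16::nat) \<le> 2^4" by simp
    also have "\<dots> \<le> 2^w" using w by (intro power_increasing) auto
    finally show ?thesis .
  qed
  have cst: "(1::nat) mod 2^w = 1" "(2::nat) mod 2^w = 2" "(3::nat) mod 2^w = 3" "(4::nat) mod 2^w = 4"
    "(5::nat) mod 2^w = 5" "(6::nat) mod 2^w = 6" "(7::nat) mod 2^w = 7" "(8::nat) mod 2^w = 8"
    "(9::nat) mod 2^w = 9" "(10::nat) mod 2^w = 10" "(11::nat) mod 2^w = 11" "(12::nat) mod 2^w = 12"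
    "(13::nat) mod 2^w = 13" using c16 w by simp_all
  have w0: "0 < w" using w by simp
  have b1: "p < 2^w" using k unfolding p_def by simp
  have wr: "wrap w (int k - 1) = p" using wrap_sub1[OF k(1), of w] b1 unfolding p_def by simp
  have b2: "t < 2^w" "bT1 + t < 2^w" "bT2 + t < 2^w" "ad < 2^w" "sa < 2^w" "bCW + j < 2^w"
    using len lt[of t] lt[of "bT1+t"] lt[of "bT2+t"] lt[of ad] lt[of sa] lt[of "bCW+j"] by auto
  have b3: "c * b < 2^w" using b2(1) unfolding t_def by simp
  have b4: "j * G + idx div q < 2^w" "j*G < 2^w" using b2(4) unfolding ad_def by auto
  have b5: "(j div 2 ^ e) * 2 ^ L + a < 2^w" "(j div 2 ^ e) * 2 ^ L < 2^w" using b2(5) unfolding sa_def by auto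
  have b6: "m ! sa + bc < 2^w" using bnd by simp
  have md: "(bCW + j) mod 2^w = bCW + j" "(c * b) mod 2^w = c * b" "t mod 2^w = t"
     "(bT1 + t) mod 2^w = bT1 + t" "(bT2 + t) mod 2^w = bT2 + t" "(j * G) mod 2^w = j * G"
     "(j * G + idx div q) mod 2^w = j * G + idx div q" "ad mod 2^w = ad"
     "(idx mod q * f) mod 2^w = idx mod q * f" "(pos * L) mod 2^w = pos * L"
     "(j div 2 ^ e * 2 ^ L) mod 2^w = j div 2 ^ e * 2 ^ L"
     "(j div 2 ^ e * 2 ^ L + a) mod 2^w = j div 2 ^ e * 2 ^ L + a" "sa mod 2^w = sa"
     "(m ! sa + bc) mod 2^w = m ! sa + bc" "(m ! sa + bc + loc) mod 2^w = m ! sa + bc + loc"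
    using b2 b3 b4 b5 b6 bnd by simp_all
  have l2: "0 < length m" "1 < length m" "2 < length m" "3 < length m" "4 < length m" "5 < length m"
    "6 < length m" "7 < length m" "8 < length m" "9 < length m" "10 < length m" "11 < length m"
    "12 < length m" "13 < length m" "m \<noteq> []" "Suc 0 < length m" using len by auto
  have hd1: "m ! Suc 0 = b" using hd by simp
  have fo: "p div b = j" "p mod b = pos" "m ! (bCW + j) = c" "c * b + pos = t"
    "m ! (bT1 + t) = loc" "m ! (bT2 + t) = idx" "j * G + idx div q + bBP = ad"
    "m ! ad div 2 ^ (idx mod q * f) mod 2 ^ f = bc" "c div 2 ^ (pos * L) mod 2 ^ L = a"
    "j div 2 ^ e * 2 ^ L + a + bSP = sa"
    unfolding j_def pos_def c_def t_def loc_def idx_def ad_def bc_def a_def sa_def by simp_all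
  have s0: "step w m Pr (0, (\<lambda>_. 0)(0 := k)) = (1, (\<lambda>_. 0)(0 := k, 1 := 1))"
    by (simp add: step_def Pr_nth Pr_len cst wr md fo hd hd1 l2 len w0 fun_eq_iff)
  have s1: "step w m Pr (1, (\<lambda>_. 0)(0 := k, 1 := 1)) = (2, (\<lambda>_. 0)(0 := k, 1 := 1))"
    by (simp add: step_def Pr_nth Pr_len cst wr md fo hd hd1 l2 len w0 fun_eq_iff)
  have s2: "step w m Pr (2, (\<lambda>_. 0)(0 := k, 1 := 1)) = (3, (\<lambda>_. 0)(0 := k, 1 := 1, 2 := 1))"
    by (simp add: step_def Pr_nth Pr_len cst wr md fo hd hd1 l2 len w0 fun_eq_iff)
  have s3: "step w m Pr (3, (\<lambda>_. 0)(0 := k, 1 := 1, 2 := 1)) = (4, (\<lambda>_. 0)(0 := k, 1 := 1, 2 := 1, 3 := p))"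
    by (simp add: step_def Pr_nth Pr_len cst wr md fo hd hd1 l2 len w0 fun_eq_iff)
  have s4: "step w m Pr (4, (\<lambda>_. 0)(0 := k, 1 := 1, 2 := 1, 3 := p)) = (5, (\<lambda>_. 0)(0 := k, 1 := 1, 2 := 1, 3 := p, 4 := b))"
    by (simp add: step_def Pr_nth Pr_len cst wr md fo hd hd1 l2 len w0 fun_eq_iff)
  have s5: "step w m Pr (5, (\<lambda>_. 0)(0 := k, 1 := 1, 2 := 1, 3 := p, 4 := b)) = (6, (\<lambda>_. 0)(0 := k, 1 := 1, 2 := 1, 3 := p, 4 := b, 5 := j))"
    by (simp add: step_def Pr_nth Pr_len cst wr md fo hd hd1 l2 len w0 fun_eq_iff)
  have s6: "step w m Pr (6, (\<lambda>_. 0)(0 := k, 1 := 1, 2 := 1, 3 := p, 4 := b, 5 := j)) = (7, (\<lambda>_. 0)(0 := k, 1 := 1, 2 := 1, 3 := p, 4 := b, 5 := j, 6 := pos))"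
    by (simp add: step_def Pr_nth Pr_len cst wr md fo hd hd1 l2 len w0 fun_eq_iff)
  have s7: "step w m Pr (7, (\<lambda>_. 0)(0 := k, 1 := 1, 2 := 1, 3 := p, 4 := b, 5 := j, 6 := pos)) = (8, (\<lambda>_. 0)(0 := k, 1 := 1, 2 := 1, 3 := p, 4 := b, 5 := j, 6 := pos, 7 := 2))"
    by (simp add: step_def Pr_nth Pr_len cst wr md fo hd hd1 l2 len w0 fun_eq_iff)
  have s8: "step w m Pr (8, (\<lambda>_. 0)(0 := k, 1 := 1, 2 := 1, 3 := p, 4 := b, 5 := j, 6 := pos, 7 := 2)) = (9, (\<lambda>_. 0)(0 := k, 1 := 1, 2 := 1, 3 := p, 4 := b, 5 := j, 6 := pos, 7 := bCW))"
    by (simp add: step_def Pr_nth Pr_len cst wr md fo hd hd1 l2 len w0 fun_eq_iff)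
  have s9: "step w m Pr (9, (\<lambda>_. 0)(0 := k, 1 := 1, 2 := 1, 3 := p, 4 := b, 5 := j, 6 := pos, 7 := bCW)) = (10, (\<lambda>_. 0)(0 := k, 1 := 1, 2 := 1, 3 := p, 4 := b, 5 := j, 6 := pos, 7 := bCW + j))"
    by (simp add: step_def Pr_nth Pr_len cst wr md fo hd hd1 l2 len w0 fun_eq_iff)
  have s10: "step w m Pr (10, (\<lambda>_. 0)(0 := k, 1 := 1, 2 := 1, 3 := p, 4 := b, 5 := j, 6 := pos, 7 := bCW + j)) = (11, (\<lambda>_. 0)(0 := k, 1 := 1, 2 := 1, 3 := p, 4 := b, 5 := j, 6 := pos, 7 := bCW + j, 8 := c))"
    by (simp add: step_def Pr_nth Pr_len cst wr md fo hd hd1 l2 len w0 fun_eq_iff)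
  have s11: "step w m Pr (11, (\<lambda>_. 0)(0 := k, 1 := 1, 2 := 1, 3 := p, 4 := b, 5 := j, 6 := pos, 7 := bCW + j, 8 := c)) = (12, (\<lambda>_. 0)(0 := k, 1 := 1, 2 := 1, 3 := p, 4 := b, 5 := j, 6 := pos, 7 := bCW + j, 8 := c, 10 := c * b))"
    by (simp add: step_def Pr_nth Pr_len cst wr md fo hd hd1 l2 len w0 fun_eq_iff)
  have s12: "step w m Pr (12, (\<lambda>_. 0)(0 := k, 1 := 1, 2 := 1, 3 := p, 4 := b, 5 := j, 6 := pos, 7 := bCW + j, 8 := c, 10 := c * b)) = (13, (\<lambda>_. 0)(0 := k, 1 := 1, 2 := 1, 3 := p, 4 := b, 5 := j, 6 := pos, 7 := bCW + j, 8 := c, 10 := t))"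
    by (simp add: step_def Pr_nth Pr_len cst wr md fo hd hd1 l2 len w0 fun_eq_iff)
  have s13: "step w m Pr (13, (\<lambda>_. 0)(0 := k, 1 := 1, 2 := 1, 3 := p, 4 := b, 5 := j, 6 := pos, 7 := bCW + j, 8 := c, 10 := t)) = (14, (\<lambda>_. 0)(0 := k, 1 := 1, 2 := 1, 3 := p, 4 := b, 5 := j, 6 := pos, 7 := 3, 8 := c, 10 := t))"
    by (simp add: step_def Pr_nth Pr_len cst wr md fo hd hd1 l2 len w0 fun_eq_iff)
  have s14: "step w m Pr (14, (\<lambda>_. 0)(0 := k, 1 := 1, 2 := 1, 3 := p, 4 := b, 5 := j, 6 := pos, 7 := 3, 8 := c, 10 := t)) = (15, (\<lambda>_. 0)(0 := k, 1 := 1, 2 := 1, 3 := p, 4 := b, 5 := j, 6 := pos, 7 := bT1, 8 := c, 10 := t))"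
    by (simp add: step_def Pr_nth Pr_len cst wr md fo hd hd1 l2 len w0 fun_eq_iff)
  have s15: "step w m Pr (15, (\<lambda>_. 0)(0 := k, 1 := 1, 2 := 1, 3 := p, 4 := b, 5 := j, 6 := pos, 7 := bT1, 8 := c, 10 := t)) = (16, (\<lambda>_. 0)(0 := k, 1 := 1, 2 := 1, 3 := p, 4 := b, 5 := j, 6 := pos, 7 := bT1 + t, 8 := c, 10 := t))"
    by (simp add: step_def Pr_nth Pr_len cst wr md fo hd hd1 l2 len w0 fun_eq_iff)
  have s16: "step w m Pr (16, (\<lambda>_. 0)(0 := k, 1 := 1, 2 := 1, 3 := p, 4 := b, 5 := j, 6 := pos, 7 := bT1 + t, 8 := c, 10 := t)) = (17, (\<lambda>_. 0)(0 := k, 1 := 1, 2 := 1, 3 := p, 4 := b, 5 := j, 6 := pos, 7 := bT1 + t, 8 := c, 10 := t, 11 := loc))"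
    by (simp add: step_def Pr_nth Pr_len cst wr md fo hd hd1 l2 len w0 fun_eq_iff)
  have s17: "step w m Pr (17, (\<lambda>_. 0)(0 := k, 1 := 1, 2 := 1, 3 := p, 4 := b, 5 := j, 6 := pos, 7 := bT1 + t, 8 := c, 10 := t, 11 := loc)) = (18, (\<lambda>_. 0)(0 := k, 1 := 1, 2 := 1, 3 := p, 4 := b, 5 := j, 6 := pos, 7 := 4, 8 := c, 10 := t, 11 := loc))"
    by (simp add: step_def Pr_nth Pr_len cst wr md fo hd hd1 l2 len w0 fun_eq_iff)
  have s18: "step w m Pr (18, (\<lambda>_. 0)(0 := k, 1 := 1, 2 := 1, 3 := p, 4 := b, 5 := j, 6 := pos, 7 := 4, 8 := c, 10 := t, 11 := loc)) = (19, (\<lambda>_. 0)(0 := k, 1 := 1, 2 := 1, 3 := p, 4 := b, 5 := j, 6 := pos, 7 := bT2, 8 := c, 10 := t, 11 := loc))"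
    by (simp add: step_def Pr_nth Pr_len cst wr md fo hd hd1 l2 len w0 fun_eq_iff)
  have s19: "step w m Pr (19, (\<lambda>_. 0)(0 := k, 1 := 1, 2 := 1, 3 := p, 4 := b, 5 := j, 6 := pos, 7 := bT2, 8 := c, 10 := t, 11 := loc)) = (20, (\<lambda>_. 0)(0 := k, 1 := 1, 2 := 1, 3 := p, 4 := b, 5 := j, 6 := pos, 7 := bT2 + t, 8 := c, 10 := t, 11 := loc))"
    by (simp add: step_def Pr_nth Pr_len cst wr md fo hd hd1 l2 len w0 fun_eq_iff)
  have s20: "step w m Pr (20, (\<lambda>_. 0)(0 := k, 1 := 1, 2 := 1, 3 := p, 4 := b, 5 := j, 6 := pos, 7 := bT2 + t, 8 := c, 10 := t, 11 := loc)) = (21, (\<lambda>_. 0)(0 := k, 1 := 1, 2 := 1, 3 := p, 4 := b, 5 := j, 6 := pos, 7 := bT2 + t, 8 := c, 10 := t, 11 := loc, 12 := idx))"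
    by (simp add: step_def Pr_nth Pr_len cst wr md fo hd hd1 l2 len w0 fun_eq_iff)
  have s21: "step w m Pr (21, (\<lambda>_. 0)(0 := k, 1 := 1, 2 := 1, 3 := p, 4 := b, 5 := j, 6 := pos, 7 := bT2 + t, 8 := c, 10 := t, 11 := loc, 12 := idx)) = (22, (\<lambda>_. 0)(0 := k, 1 := 1, 2 := 1, 3 := p, 4 := b, 5 := j, 6 := pos, 7 := 5, 8 := c, 10 := t, 11 := loc, 12 := idx))"
    by (simp add: step_def Pr_nth Pr_len cst wr md fo hd hd1 l2 len w0 fun_eq_iff)
  have s22: "step w m Pr (22, (\<lambda>_. 0)(0 := k, 1 := 1, 2 := 1, 3 := p, 4 := b, 5 := j, 6 := pos, 7 := 5, 8 := c, 10 := t, 11 := loc, 12 := idx)) = (23, (\<lambda>_. 0)(0 := k, 1 := 1, 2 := 1, 3 := p, 4 := b, 5 := j, 6 := pos, 7 := 5, 8 := c, 10 := t, 11 := loc, 12 := idx, 13 := q))"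
    by (simp add: step_def Pr_nth Pr_len cst wr md fo hd hd1 l2 len w0 fun_eq_iff)
  have s23: "step w m Pr (23, (\<lambda>_. 0)(0 := k, 1 := 1, 2 := 1, 3 := p, 4 := b, 5 := j, 6 := pos, 7 := 5, 8 := c, 10 := t, 11 := loc, 12 := idx, 13 := q)) = (24, (\<lambda>_. 0)(0 := k, 1 := 1, 2 := 1, 3 := p, 4 := b, 5 := j, 6 := pos, 7 := 5, 8 := c, 10 := t, 11 := loc, 12 := idx, 13 := q, 14 := idx div q))"
    by (simp add: step_def Pr_nth Pr_len cst wr md fo hd hd1 l2 len w0 fun_eq_iff)
  have s24: "step w m Pr (24, (\<lambda>_. 0)(0 := k, 1 := 1, 2 := 1, 3 := p, 4 := b, 5 := j, 6 := pos, 7 := 5, 8 := c, 10 := t, 11 := loc, 12 := idx, 13 := q, 14 := idx div q)) = (25, (\<lambda>_. 0)(0 := k, 1 := 1, 2 := 1, 3 := p, 4 := b, 5 := j, 6 := pos, 7 := 5, 8 := c, 10 := t, 11 := loc, 12 := idx, 13 := q, 14 := idx div q, 15 := idx mod q))"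
    by (simp add: step_def Pr_nth Pr_len cst wr md fo hd hd1 l2 len w0 fun_eq_iff)
  have s25: "step w m Pr (25, (\<lambda>_. 0)(0 := k, 1 := 1, 2 := 1, 3 := p, 4 := b, 5 := j, 6 := pos, 7 := 5, 8 := c, 10 := t, 11 := loc, 12 := idx, 13 := q, 14 := idx div q, 15 := idx mod q)) = (26, (\<lambda>_. 0)(0 := k, 1 := 1, 2 := 1, 3 := p, 4 := b, 5 := j, 6 := pos, 7 := 6, 8 := c, 10 := t, 11 := loc, 12 := idx, 13 := q, 14 := idx div q, 15 := idx mod q))"
    by (simp add: step_def Pr_nth Pr_len cst wr md fo hd hd1 l2 len w0 fun_eq_iff)
  have s26: "step w m Pr (26, (\<lambda>_. 0)(0 := k, 1 := 1, 2 := 1, 3 := p, 4 := b, 5 := j, 6 := pos, 7 := 6, 8 := c, 10 := t, 11 := loc, 12 := idx, 13 := q, 14 := idx div q, 15 := idx mod q)) = (27, (\<lambda>_. 0)(0 := k, 1 := 1, 2 := 1, 3 := p, 4 := b, 5 := j, 6 := pos, 7 := 6, 8 := c, 10 := t, 11 := loc, 12 := idx, 13 := q, 14 := idx div q, 15 := idx mod q, 16 := G))"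
    by (simp add: step_def Pr_nth Pr_len cst wr md fo hd hd1 l2 len w0 fun_eq_iff)
  have s27: "step w m Pr (27, (\<lambda>_. 0)(0 := k, 1 := 1, 2 := 1, 3 := p, 4 := b, 5 := j, 6 := pos, 7 := 6, 8 := c, 10 := t, 11 := loc, 12 := idx, 13 := q, 14 := idx div q, 15 := idx mod q, 16 := G)) = (28, (\<lambda>_. 0)(0 := k, 1 := 1, 2 := 1, 3 := p, 4 := b, 5 := j, 6 := pos, 7 := 6, 8 := c, 10 := t, 11 := loc, 12 := idx, 13 := q, 14 := idx div q, 15 := idx mod q, 16 := j * G))"
    by (simp add: step_def Pr_nth Pr_len cst wr md fo hd hd1 l2 len w0 fun_eq_iff)
  have s28: "step w m Pr (28, (\<lambda>_. 0)(0 := k, 1 := 1, 2 := 1, 3 := p, 4 := b, 5 := j, 6 := pos, 7 := 6, 8 := c, 10 := t, 11 := loc, 12 := idx, 13 := q, 14 := idx div q, 15 := idx mod q, 16 := j * G)) = (29, (\<lambda>_. 0)(0 := k, 1 := 1, 2 := 1, 3 := p, 4 := b, 5 := j, 6 := pos, 7 := 6, 8 := c, 10 := t, 11 := loc, 12 := idx, 13 := q, 14 := idx div q, 15 := idx mod q, 16 := j * G + idx div q))"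
    by (simp add: step_def Pr_nth Pr_len cst wr md fo hd hd1 l2 len w0 fun_eq_iff)
  have s29: "step w m Pr (29, (\<lambda>_. 0)(0 := k, 1 := 1, 2 := 1, 3 := p, 4 := b, 5 := j, 6 := pos, 7 := 6, 8 := c, 10 := t, 11 := loc, 12 := idx, 13 := q, 14 := idx div q, 15 := idx mod q, 16 := j * G + idx div q)) = (30, (\<lambda>_. 0)(0 := k, 1 := 1, 2 := 1, 3 := p, 4 := b, 5 := j, 6 := pos, 7 := 7, 8 := c, 10 := t, 11 := loc, 12 := idx, 13 := q, 14 := idx div q, 15 := idx mod q, 16 := j * G + idx div q))"
    by (simp add: step_def Pr_nth Pr_len cst wr md fo hd hd1 l2 len w0 fun_eq_iff)
  have s30: "step w m Pr (30, (\<lambda>_. 0)(0 := k, 1 := 1, 2 := 1, 3 := p, 4 := b, 5 := j, 6 := pos, 7 := 7, 8 := c, 10 := t, 11 := loc, 12 := idx, 13 := q, 14 := idx div q, 15 := idx mod q, 16 := j * G + idx div q)) = (31, (\<lambda>_. 0)(0 := k, 1 := 1, 2 := 1, 3 := p, 4 := b, 5 := j, 6 := pos, 7 := bBP, 8 := c, 10 := t, 11 := loc, 12 := idx, 13 := q, 14 := idx div q, 15 := idx mod q, 16 := j * G + idx div q))"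
    by (simp add: step_def Pr_nth Pr_len cst wr md fo hd hd1 l2 len w0 fun_eq_iff)
  have s31: "step w m Pr (31, (\<lambda>_. 0)(0 := k, 1 := 1, 2 := 1, 3 := p, 4 := b, 5 := j, 6 := pos, 7 := bBP, 8 := c, 10 := t, 11 := loc, 12 := idx, 13 := q, 14 := idx div q, 15 := idx mod q, 16 := j * G + idx div q)) = (32, (\<lambda>_. 0)(0 := k, 1 := 1, 2 := 1, 3 := p, 4 := b, 5 := j, 6 := pos, 7 := bBP, 8 := c, 10 := t, 11 := loc, 12 := idx, 13 := q, 14 := idx div q, 15 := idx mod q, 16 := ad))"
    by (simp add: step_def Pr_nth Pr_len cst wr md fo hd hd1 l2 len w0 fun_eq_iff)
  have s32: "step w m Pr (32, (\<lambda>_. 0)(0 := k, 1 := 1, 2 := 1, 3 := p, 4 := b, 5 := j, 6 := pos, 7 := bBP, 8 := c, 10 := t, 11 := loc, 12 := idx, 13 := q, 14 := idx div q, 15 := idx mod q, 16 := ad)) = (33, (\<lambda>_. 0)(0 := k, 1 := 1, 2 := 1, 3 := p, 4 := b, 5 := j, 6 := pos, 7 := bBP, 8 := c, 10 := t, 11 := loc, 12 := idx, 13 := q, 14 := idx div q, 15 := idx mod q, 16 := ad, 17 := m ! ad))"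
    by (simp add: step_def Pr_nth Pr_len cst wr md fo hd hd1 l2 len w0 fun_eq_iff)
  have s33: "step w m Pr (33, (\<lambda>_. 0)(0 := k, 1 := 1, 2 := 1, 3 := p, 4 := b, 5 := j, 6 := pos, 7 := bBP, 8 := c, 10 := t, 11 := loc, 12 := idx, 13 := q, 14 := idx div q, 15 := idx mod q, 16 := ad, 17 := m ! ad)) = (34, (\<lambda>_. 0)(0 := k, 1 := 1, 2 := 1, 3 := p, 4 := b, 5 := j, 6 := pos, 7 := 8, 8 := c, 10 := t, 11 := loc, 12 := idx, 13 := q, 14 := idx div q, 15 := idx mod q, 16 := ad, 17 := m ! ad))"
    by (simp add: step_def Pr_nth Pr_len cst wr md fo hd hd1 l2 len w0 fun_eq_iff)
  have s34: "step w m Pr (34, (\<lambda>_. 0)(0 := k, 1 := 1, 2 := 1, 3 := p, 4 := b, 5 := j, 6 := pos, 7 := 8, 8 := c, 10 := t, 11 := loc, 12 := idx, 13 := q, 14 := idx div q, 15 := idx mod q, 16 := ad, 17 := m ! ad)) = (35, (\<lambda>_. 0)(0 := k, 1 := 1, 2 := 1, 3 := p, 4 := b, 5 := j, 6 := pos, 7 := f, 8 := c, 10 := t, 11 := loc, 12 := idx, 13 := q, 14 := idx div q, 15 := idx mod q, 16 := ad, 17 := m ! ad))"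
    by (simp add: step_def Pr_nth Pr_len cst wr md fo hd hd1 l2 len w0 fun_eq_iff)
  have s35: "step w m Pr (35, (\<lambda>_. 0)(0 := k, 1 := 1, 2 := 1, 3 := p, 4 := b, 5 := j, 6 := pos, 7 := f, 8 := c, 10 := t, 11 := loc, 12 := idx, 13 := q, 14 := idx div q, 15 := idx mod q, 16 := ad, 17 := m ! ad)) = (36, (\<lambda>_. 0)(0 := k, 1 := 1, 2 := 1, 3 := p, 4 := b, 5 := j, 6 := pos, 7 := f, 8 := c, 10 := t, 11 := loc, 12 := idx, 13 := q, 14 := idx div q, 15 := idx mod q * f, 16 := ad, 17 := m ! ad))"
    by (simp add: step_def Pr_nth Pr_len cst wr md fo hd hd1 l2 len w0 fun_eq_iff)
  have s36: "step w m Pr (36, (\<lambda>_. 0)(0 := k, 1 := 1, 2 := 1, 3 := p, 4 := b, 5 := j, 6 := pos, 7 := f, 8 := c, 10 := t, 11 := loc, 12 := idx, 13 := q, 14 := idx div q, 15 := idx mod q * f, 16 := ad, 17 := m ! ad)) = (37, (\<lambda>_. 0)(0 := k, 1 := 1, 2 := 1, 3 := p, 4 := b, 5 := j, 6 := pos, 7 := f, 8 := c, 10 := t, 11 := loc, 12 := idx, 13 := q, 14 := idx div q, 15 := idx mod q * f, 16 := ad, 17 := m ! ad div 2 ^ (idx mod q * f)))"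
    by (simp add: step_def Pr_nth Pr_len cst wr md fo hd hd1 l2 len w0 fun_eq_iff)
  have s37: "step w m Pr (37, (\<lambda>_. 0)(0 := k, 1 := 1, 2 := 1, 3 := p, 4 := b, 5 := j, 6 := pos, 7 := f, 8 := c, 10 := t, 11 := loc, 12 := idx, 13 := q, 14 := idx div q, 15 := idx mod q * f, 16 := ad, 17 := m ! ad div 2 ^ (idx mod q * f))) = (38, (\<lambda>_. 0)(0 := k, 1 := 1, 2 := 1, 3 := p, 4 := b, 5 := j, 6 := pos, 7 := 9, 8 := c, 10 := t, 11 := loc, 12 := idx, 13 := q, 14 := idx div q, 15 := idx mod q * f, 16 := ad, 17 := m ! ad div 2 ^ (idx mod q * f)))"
    by (simp add: step_def Pr_nth Pr_len cst wr md fo hd hd1 l2 len w0 fun_eq_iff)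
  have s38: "step w m Pr (38, (\<lambda>_. 0)(0 := k, 1 := 1, 2 := 1, 3 := p, 4 := b, 5 := j, 6 := pos, 7 := 9, 8 := c, 10 := t, 11 := loc, 12 := idx, 13 := q, 14 := idx div q, 15 := idx mod q * f, 16 := ad, 17 := m ! ad div 2 ^ (idx mod q * f))) = (39, (\<lambda>_. 0)(0 := k, 1 := 1, 2 := 1, 3 := p, 4 := b, 5 := j, 6 := pos, 7 := 2 ^ f, 8 := c, 10 := t, 11 := loc, 12 := idx, 13 := q, 14 := idx div q, 15 := idx mod q * f, 16 := ad, 17 := m ! ad div 2 ^ (idx mod q * f)))"
    by (simp add: step_def Pr_nth Pr_len cst wr md fo hd hd1 l2 len w0 fun_eq_iff)
  have s39: "step w m Pr (39, (\<lambda>_. 0)(0 := k, 1 := 1, 2 := 1, 3 := p, 4 := b, 5 := j, 6 := pos, 7 := 2 ^ f, 8 := c, 10 := t, 11 := loc, 12 := idx, 13 := q, 14 := idx div q, 15 := idx mod q * f, 16 := ad, 17 := m ! ad div 2 ^ (idx mod q * f))) = (40, (\<lambda>_. 0)(0 := k, 1 := 1, 2 := 1, 3 := p, 4 := b, 5 := j, 6 := pos, 7 := 2 ^ f, 8 := c, 10 := t, 11 := loc, 12 := idx, 13 := q, 14 := idx div q, 15 := idx mod q * f, 16 := ad, 17 := bc))"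
    by (simp add: step_def Pr_nth Pr_len cst wr md fo hd hd1 l2 len w0 fun_eq_iff)
  have s40: "step w m Pr (40, (\<lambda>_. 0)(0 := k, 1 := 1, 2 := 1, 3 := p, 4 := b, 5 := j, 6 := pos, 7 := 2 ^ f, 8 := c, 10 := t, 11 := loc, 12 := idx, 13 := q, 14 := idx div q, 15 := idx mod q * f, 16 := ad, 17 := bc)) = (41, (\<lambda>_. 0)(0 := k, 1 := 1, 2 := 1, 3 := p, 4 := b, 5 := j, 6 := pos, 7 := 10, 8 := c, 10 := t, 11 := loc, 12 := idx, 13 := q, 14 := idx div q, 15 := idx mod q * f, 16 := ad, 17 := bc))"
    by (simp add: step_def Pr_nth Pr_len cst wr md fo hd hd1 l2 len w0 fun_eq_iff)
  have s41: "step w m Pr (41, (\<lambda>_. 0)(0 := k, 1 := 1, 2 := 1, 3 := p, 4 := b, 5 := j, 6 := pos, 7 := 10, 8 := c, 10 := t, 11 := loc, 12 := idx, 13 := q, 14 := idx div q, 15 := idx mod q * f, 16 := ad, 17 := bc)) = (42, (\<lambda>_. 0)(0 := k, 1 := 1, 2 := 1, 3 := p, 4 := b, 5 := j, 6 := pos, 7 := L, 8 := c, 10 := t, 11 := loc, 12 := idx, 13 := q, 14 := idx div q, 15 := idx mod q * f, 16 := ad, 17 := bc))"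
    by (simp add: step_def Pr_nth Pr_len cst wr md fo hd hd1 l2 len w0 fun_eq_iff)
  have s42: "step w m Pr (42, (\<lambda>_. 0)(0 := k, 1 := 1, 2 := 1, 3 := p, 4 := b, 5 := j, 6 := pos, 7 := L, 8 := c, 10 := t, 11 := loc, 12 := idx, 13 := q, 14 := idx div q, 15 := idx mod q * f, 16 := ad, 17 := bc)) = (43, (\<lambda>_. 0)(0 := k, 1 := 1, 2 := 1, 3 := p, 4 := b, 5 := j, 6 := pos, 7 := L, 8 := c, 10 := t, 11 := loc, 12 := idx, 13 := q, 14 := idx div q, 15 := idx mod q * f, 16 := ad, 17 := bc, 18 := pos * L))"
    by (simp add: step_def Pr_nth Pr_len cst wr md fo hd hd1 l2 len w0 fun_eq_iff)
  have s43: "step w m Pr (43, (\<lambda>_. 0)(0 := k, 1 := 1, 2 := 1, 3 := p, 4 := b, 5 := j, 6 := pos, 7 := L, 8 := c, 10 := t, 11 := loc, 12 := idx, 13 := q, 14 := idx div q, 15 := idx mod q * f, 16 := ad, 17 := bc, 18 := pos * L)) = (44, (\<lambda>_. 0)(0 := k, 1 := 1, 2 := 1, 3 := p, 4 := b, 5 := j, 6 := pos, 7 := L, 8 := c, 10 := t, 11 := loc, 12 := idx, 13 := q, 14 := idx div q, 15 := idx mod q * f, 16 := ad, 17 := bc, 18 := c div 2 ^ (pos * L)))"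
    by (simp add: step_def Pr_nth Pr_len cst wr md fo hd hd1 l2 len w0 fun_eq_iff)
  have s44: "step w m Pr (44, (\<lambda>_. 0)(0 := k, 1 := 1, 2 := 1, 3 := p, 4 := b, 5 := j, 6 := pos, 7 := L, 8 := c, 10 := t, 11 := loc, 12 := idx, 13 := q, 14 := idx div q, 15 := idx mod q * f, 16 := ad, 17 := bc, 18 := c div 2 ^ (pos * L))) = (45, (\<lambda>_. 0)(0 := k, 1 := 1, 2 := 1, 3 := p, 4 := b, 5 := j, 6 := pos, 7 := 11, 8 := c, 10 := t, 11 := loc, 12 := idx, 13 := q, 14 := idx div q, 15 := idx mod q * f, 16 := ad, 17 := bc, 18 := c div 2 ^ (pos * L)))"
    by (simp add: step_def Pr_nth Pr_len cst wr md fo hd hd1 l2 len w0 fun_eq_iff)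
  have s45: "step w m Pr (45, (\<lambda>_. 0)(0 := k, 1 := 1, 2 := 1, 3 := p, 4 := b, 5 := j, 6 := pos, 7 := 11, 8 := c, 10 := t, 11 := loc, 12 := idx, 13 := q, 14 := idx div q, 15 := idx mod q * f, 16 := ad, 17 := bc, 18 := c div 2 ^ (pos * L))) = (46, (\<lambda>_. 0)(0 := k, 1 := 1, 2 := 1, 3 := p, 4 := b, 5 := j, 6 := pos, 7 := 11, 8 := c, 10 := t, 11 := loc, 12 := idx, 13 := q, 14 := idx div q, 15 := idx mod q * f, 16 := ad, 17 := bc, 18 := c div 2 ^ (pos * L), 19 := 2 ^ L))"
    by (simp add: step_def Pr_nth Pr_len cst wr md fo hd hd1 l2 len w0 fun_eq_iff)
  have s46: "step w m Pr (46, (\<lambda>_. 0)(0 := k, 1 := 1, 2 := 1, 3 := p, 4 := b, 5 := j, 6 := pos, 7 := 11, 8 := c, 10 := t, 11 := loc, 12 := idx, 13 := q, 14 := idx div q, 15 := idx mod q * f, 16 := ad, 17 := bc, 18 := c div 2 ^ (pos * L), 19 := 2 ^ L)) = (47, (\<lambda>_. 0)(0 := k, 1 := 1, 2 := 1, 3 := p, 4 := b, 5 := j, 6 := pos, 7 := 11, 8 := c, 10 := t, 11 := loc, 12 := idx, 13 := q, 14 := idx div q, 15 := idx mod q * f, 16 := ad, 17 := bc, 18 := a, 19 := 2 ^ L))"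
    by (simp add: step_def Pr_nth Pr_len cst wr md fo hd hd1 l2 len w0 fun_eq_iff)
  have s47: "step w m Pr (47, (\<lambda>_. 0)(0 := k, 1 := 1, 2 := 1, 3 := p, 4 := b, 5 := j, 6 := pos, 7 := 11, 8 := c, 10 := t, 11 := loc, 12 := idx, 13 := q, 14 := idx div q, 15 := idx mod q * f, 16 := ad, 17 := bc, 18 := a, 19 := 2 ^ L)) = (48, (\<lambda>_. 0)(0 := k, 1 := 1, 2 := 1, 3 := p, 4 := b, 5 := j, 6 := pos, 7 := 12, 8 := c, 10 := t, 11 := loc, 12 := idx, 13 := q, 14 := idx div q, 15 := idx mod q * f, 16 := ad, 17 := bc, 18 := a, 19 := 2 ^ L))"
    by (simp add: step_def Pr_nth Pr_len cst wr md fo hd hd1 l2 len w0 fun_eq_iff)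
  have s48: "step w m Pr (48, (\<lambda>_. 0)(0 := k, 1 := 1, 2 := 1, 3 := p, 4 := b, 5 := j, 6 := pos, 7 := 12, 8 := c, 10 := t, 11 := loc, 12 := idx, 13 := q, 14 := idx div q, 15 := idx mod q * f, 16 := ad, 17 := bc, 18 := a, 19 := 2 ^ L)) = (49, (\<lambda>_. 0)(0 := k, 1 := 1, 2 := 1, 3 := p, 4 := b, 5 := j, 6 := pos, 7 := e, 8 := c, 10 := t, 11 := loc, 12 := idx, 13 := q, 14 := idx div q, 15 := idx mod q * f, 16 := ad, 17 := bc, 18 := a, 19 := 2 ^ L))"
    by (simp add: step_def Pr_nth Pr_len cst wr md fo hd hd1 l2 len w0 fun_eq_iff)
  have s49: "step w m Pr (49, (\<lambda>_. 0)(0 := k, 1 := 1, 2 := 1, 3 := p, 4 := b, 5 := j, 6 := pos, 7 := e, 8 := c, 10 := t, 11 := loc, 12 := idx, 13 := q, 14 := idx div q, 15 := idx mod q * f, 16 := ad, 17 := bc, 18 := a, 19 := 2 ^ L)) = (50, (\<lambda>_. 0)(0 := k, 1 := 1, 2 := 1, 3 := p, 4 := b, 5 := j, 6 := pos, 7 := e, 8 := c, 10 := t, 11 := loc, 12 := idx, 13 := q, 14 := idx div q, 15 := idx mod q * f, 16 := ad, 17 := bc, 18 := a, 19 := 2 ^ L, 20 := j div 2 ^ e))"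
    by (simp add: step_def Pr_nth Pr_len cst wr md fo hd hd1 l2 len w0 fun_eq_iff)
  have s50: "step w m Pr (50, (\<lambda>_. 0)(0 := k, 1 := 1, 2 := 1, 3 := p, 4 := b, 5 := j, 6 := pos, 7 := e, 8 := c, 10 := t, 11 := loc, 12 := idx, 13 := q, 14 := idx div q, 15 := idx mod q * f, 16 := ad, 17 := bc, 18 := a, 19 := 2 ^ L, 20 := j div 2 ^ e)) = (51, (\<lambda>_. 0)(0 := k, 1 := 1, 2 := 1, 3 := p, 4 := b, 5 := j, 6 := pos, 7 := e, 8 := c, 10 := t, 11 := loc, 12 := idx, 13 := q, 14 := idx div q, 15 := idx mod q * f, 16 := ad, 17 := bc, 18 := a, 19 := 2 ^ L, 20 := j div 2 ^ e * 2 ^ L))"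
    by (simp add: step_def Pr_nth Pr_len cst wr md fo hd hd1 l2 len w0 fun_eq_iff)
  have s51: "step w m Pr (51, (\<lambda>_. 0)(0 := k, 1 := 1, 2 := 1, 3 := p, 4 := b, 5 := j, 6 := pos, 7 := e, 8 := c, 10 := t, 11 := loc, 12 := idx, 13 := q, 14 := idx div q, 15 := idx mod q * f, 16 := ad, 17 := bc, 18 := a, 19 := 2 ^ L, 20 := j div 2 ^ e * 2 ^ L)) = (52, (\<lambda>_. 0)(0 := k, 1 := 1, 2 := 1, 3 := p, 4 := b, 5 := j, 6 := pos, 7 := e, 8 := c, 10 := t, 11 := loc, 12 := idx, 13 := q, 14 := idx div q, 15 := idx mod q * f, 16 := ad, 17 := bc, 18 := a, 19 := 2 ^ L, 20 := j div 2 ^ e * 2 ^ L + a))"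
    by (simp add: step_def Pr_nth Pr_len cst wr md fo hd hd1 l2 len w0 fun_eq_iff)
  have s52: "step w m Pr (52, (\<lambda>_. 0)(0 := k, 1 := 1, 2 := 1, 3 := p, 4 := b, 5 := j, 6 := pos, 7 := e, 8 := c, 10 := t, 11 := loc, 12 := idx, 13 := q, 14 := idx div q, 15 := idx mod q * f, 16 := ad, 17 := bc, 18 := a, 19 := 2 ^ L, 20 := j div 2 ^ e * 2 ^ L + a)) = (53, (\<lambda>_. 0)(0 := k, 1 := 1, 2 := 1, 3 := p, 4 := b, 5 := j, 6 := pos, 7 := 13, 8 := c, 10 := t, 11 := loc, 12 := idx, 13 := q, 14 := idx div q, 15 := idx mod q * f, 16 := ad, 17 := bc, 18 := a, 19 := 2 ^ L, 20 := j div 2 ^ e * 2 ^ L + a))"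
    by (simp add: step_def Pr_nth Pr_len cst wr md fo hd hd1 l2 len w0 fun_eq_iff)
  have s53: "step w m Pr (53, (\<lambda>_. 0)(0 := k, 1 := 1, 2 := 1, 3 := p, 4 := b, 5 := j, 6 := pos, 7 := 13, 8 := c, 10 := t, 11 := loc, 12 := idx, 13 := q, 14 := idx div q, 15 := idx mod q * f, 16 := ad, 17 := bc, 18 := a, 19 := 2 ^ L, 20 := j div 2 ^ e * 2 ^ L + a)) = (54, (\<lambda>_. 0)(0 := k, 1 := 1, 2 := 1, 3 := p, 4 := b, 5 := j, 6 := pos, 7 := bSP, 8 := c, 10 := t, 11 := loc, 12 := idx, 13 := q, 14 := idx div q, 15 := idx mod q * f, 16 := ad, 17 := bc, 18 := a, 19 := 2 ^ L, 20 := j div 2 ^ e * 2 ^ L + a))"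
    by (simp add: step_def Pr_nth Pr_len cst wr md fo hd hd1 l2 len w0 fun_eq_iff)
  have s54: "step w m Pr (54, (\<lambda>_. 0)(0 := k, 1 := 1, 2 := 1, 3 := p, 4 := b, 5 := j, 6 := pos, 7 := bSP, 8 := c, 10 := t, 11 := loc, 12 := idx, 13 := q, 14 := idx div q, 15 := idx mod q * f, 16 := ad, 17 := bc, 18 := a, 19 := 2 ^ L, 20 := j div 2 ^ e * 2 ^ L + a)) = (55, (\<lambda>_. 0)(0 := k, 1 := 1, 2 := 1, 3 := p, 4 := b, 5 := j, 6 := pos, 7 := bSP, 8 := c, 10 := t, 11 := loc, 12 := idx, 13 := q, 14 := idx div q, 15 := idx mod q * f, 16 := ad, 17 := bc, 18 := a, 19 := 2 ^ L, 20 := sa))"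
    by (simp add: step_def Pr_nth Pr_len cst wr md fo hd hd1 l2 len w0 fun_eq_iff)
  have s55: "step w m Pr (55, (\<lambda>_. 0)(0 := k, 1 := 1, 2 := 1, 3 := p, 4 := b, 5 := j, 6 := pos, 7 := bSP, 8 := c, 10 := t, 11 := loc, 12 := idx, 13 := q, 14 := idx div q, 15 := idx mod q * f, 16 := ad, 17 := bc, 18 := a, 19 := 2 ^ L, 20 := sa)) = (56, (\<lambda>_. 0)(0 := k, 1 := 1, 2 := 1, 3 := p, 4 := b, 5 := j, 6 := pos, 7 := bSP, 8 := c, 10 := t, 11 := loc, 12 := idx, 13 := q, 14 := idx div q, 15 := idx mod q * f, 16 := ad, 17 := bc, 18 := a, 19 := 2 ^ L, 20 := m ! sa))"
    by (simp add: step_def Pr_nth Pr_len cst wr md fo hd hd1 l2 len w0 fun_eq_iff)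
  have s56: "step w m Pr (56, (\<lambda>_. 0)(0 := k, 1 := 1, 2 := 1, 3 := p, 4 := b, 5 := j, 6 := pos, 7 := bSP, 8 := c, 10 := t, 11 := loc, 12 := idx, 13 := q, 14 := idx div q, 15 := idx mod q * f, 16 := ad, 17 := bc, 18 := a, 19 := 2 ^ L, 20 := m ! sa)) = (57, (\<lambda>_. 0)(0 := m ! sa + bc, 1 := 1, 2 := 1, 3 := p, 4 := b, 5 := j, 6 := pos, 7 := bSP, 8 := c, 10 := t, 11 := loc, 12 := idx, 13 := q, 14 := idx div q, 15 := idx mod q * f, 16 := ad, 17 := bc, 18 := a, 19 := 2 ^ L, 20 := m ! sa))"
    by (simp add: step_def Pr_nth Pr_len cst wr md fo hd hd1 l2 len w0 fun_eq_iff)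
  have s57: "step w m Pr (57, (\<lambda>_. 0)(0 := m ! sa + bc, 1 := 1, 2 := 1, 3 := p, 4 := b, 5 := j, 6 := pos, 7 := bSP, 8 := c, 10 := t, 11 := loc, 12 := idx, 13 := q, 14 := idx div q, 15 := idx mod q * f, 16 := ad, 17 := bc, 18 := a, 19 := 2 ^ L, 20 := m ! sa)) = (58, (\<lambda>_. 0)(0 := m ! sa + bc + loc, 1 := 1, 2 := 1, 3 := p, 4 := b, 5 := j, 6 := pos, 7 := bSP, 8 := c, 10 := t, 11 := loc, 12 := idx, 13 := q, 14 := idx div q, 15 := idx mod q * f, 16 := ad, 17 := bc, 18 := a, 19 := 2 ^ L, 20 := m ! sa))"
    by (simp add: step_def Pr_nth Pr_len cst wr md fo hd hd1 l2 len w0 fun_eq_iff)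
  have "run w m Pr 58 (0, (\<lambda>_. 0)(0 := k)) = (58, (\<lambda>_. 0)(0 := m ! sa + bc + loc, 1 := 1, 2 := 1, 3 := p, 4 := b, 5 := j, 6 := pos, 7 := bSP, 8 := c, 10 := t, 11 := loc, 12 := idx, 13 := q, 14 := idx div q, 15 := idx mod q * f, 16 := ad, 17 := bc, 18 := a, 19 := 2 ^ L, 20 := m ! sa))"
  proof -
    have e: "(58::nat) = Suc (Suc (Suc (Suc (Suc (Suc (Suc (Suc (Suc (Suc (Suc (Suc (Suc (Suc (Suc (Suc (Suc (Suc (Suc (Suc (Suc (Suc (Suc (Suc (Suc (Suc (Suc (Suc (Suc (Suc (Suc (Suc (Suc (Suc (Suc (Suc (Suc (Suc (Suc (Suc (Suc (Suc (Suc (Suc (Suc (Suc (Suc (Suc (Suc (Suc (Suc (Suc (Suc (Suc (Suc (Suc (Suc (Suc (0))))))))))))))))))))))))))))))))))))))))))))))))))))))))))" by simp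
    show ?thesis unfolding e by (simp only: run_Suc run_0 s0 s1 s2 s3 s4 s5 s6 s7 s8 s9 s10 s11 s12 s13 s14 s15 s16 s17 s18 s19 s20 s21 s22 s23 s24 s25 s26 s27 s28 s29 s30 s31 s32 s33 s34 s35 s36 s37 s38 s39 s40 s41 s42 s43 s44 s45 s46 s47 s48 s49 s50 s51 s52 s53 s54 s55 s56 s57) (simp only: e)
  qed
  then show ?thesis unfolding answers_within_def
    by (intro exI[of _ 58]) (simp add: halted_def Pr_nth Pr_len)
qed

primrec enc :: "nat \<Rightarrow> nat list \<Rightarrow> nat" where
  "enc L [] = 0"
| "enc L (x # xs) = x + 2 ^ L * enc L xs"

lemma enc_less: "\<forall>x\<in>set xs. x < 2 ^ L \<Longrightarrow> enc L xs < 2 ^ (L * length xs)"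
proof (induction xs)
  case Nil then show ?case by simp
next
  case (Cons x xs)
  then have h: "enc L xs < 2 ^ (L * length xs)" "x < 2^L" by auto
  then have "enc L xs + 1 \<le> 2 ^ (L * length xs)" by simp
  then have "2^L * (enc L xs + 1) \<le> 2^L * 2 ^ (L * length xs)" by (rule mult_le_mono2)
  then have "x + 2^L * enc L xs < 2^L * 2 ^ (L * length xs)" using h(2) by (simp add: algebra_simps)
  then show ?case by (simp add: power_add[symmetric] algebra_simps)
qed

lemma enc_digit: "\<forall>x\<in>set xs. x < 2 ^ L \<Longrightarrow> u < length xs \<Longrightarrow>
   enc L xs div 2 ^ (u * L) mod 2 ^ L = xs ! u"
proof (induction xs arbitrary: u)
  case Nil then show ?case by simp
next
  case (Cons x xs)
  show ?case
  proof (cases u)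
    case 0 then show ?thesis using Cons.prems by simp
  next
    case (Suc v)
    have "enc L (x # xs) div 2 ^ (u * L) = (x + 2^L * enc L xs) div 2^L div 2^(v*L)"
      by (simp add: Suc power_add div_mult2_eq mult.commute)
    also have "(x + 2^L * enc L xs) div 2^L = enc L xs" using Cons.prems(1) by simp
    finally show ?thesis using Cons Suc by simp
  qed
qed

lemma concat_unif_len: "length (concat (map (\<lambda>i. map (F i) [0..<K]) [0..<N])) = N * K"
  by (induction N) (auto simp: length_concat sum_list_triv)

lemma concat_unif_nth: "i < N \<Longrightarrow> u < K \<Longrightarrow>
  concat (map (\<lambda>i. map (F i) [0..<K]) [0..<N]) ! (i * K + u) = F i u"
proof (induction N)
  case 0 then show ?case by simp
next
  case (Suc N)
  show ?case
  proof (cases "i < N")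
    case True
    have "i * K + u < Suc i * K" using Suc.prems by simp
    also have "Suc i * K \<le> N * K" using True by (intro mult_le_mono1) simp
    finally have "i * K + u < N * K" .
    then show ?thesis using Suc True by (simp add: nth_append concat_unif_len)
  next
    case False
    then have "i = N" using Suc.prems by simp
    then show ?thesis using Suc.prems by (simp add: nth_append concat_unif_len)
  qed
qed

lemma concat_bound: "\<forall>i<N. \<forall>u<K. F i u < B \<Longrightarrow> \<forall>x\<in>set (concat (map (\<lambda>i. map (F i) [0..<K]) [0..<N])). x < B"
  by auto

lemma card_split3:
  fixes x y p :: nat
  assumes "x \<le> y" "y \<le> p"
  shows "card {i. i < x \<and> P i} + card {i. x \<le> i \<and> i < y \<and> P i} + card {t. t \<le> p - y \<and> P (y + t)}
       = card {i. i \<le> p \<and> P i}"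
proof -
  have im: "{i. y \<le> i \<and> i \<le> p \<and> P i} = (\<lambda>t. y + t) ` {t. t \<le> p - y \<and> P (y + t)}"
  proof (rule set_eqI, rule iffI)
    fix i assume "i \<in> {i. y \<le> i \<and> i \<le> p \<and> P i}"
    then show "i \<in> (\<lambda>t. y + t) ` {t. t \<le> p - y \<and> P (y + t)}"
      by (intro image_eqI[of _ _ "i - y"]) (auto simp: le_add_diff_inverse)
  qed (use assms in auto)
  have c3: "card {t. t \<le> p - y \<and> P (y + t)} = card {i. y \<le> i \<and> i \<le> p \<and> P i}"
    unfolding im by (rule card_image[symmetric]) (simp add: inj_on_def)
  have u1: "{i. i \<le> p \<and> P i} = {i. i < x \<and> P i} \<union> ({i. x \<le> i \<and> i < y \<and> P i} \<union> {i. y \<le> i \<and> i \<le> p \<and> P i})"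
    using assms by auto
  have "card {i. i \<le> p \<and> P i} = card {i. i < x \<and> P i} + card ({i. x \<le> i \<and> i < y \<and> P i} \<union> {i. y \<le> i \<and> i \<le> p \<and> P i})"
    unfolding u1 by (rule card_Un_disjoint) (use assms in auto)
  also have "card ({i. x \<le> i \<and> i < y \<and> P i} \<union> {i. y \<le> i \<and> i \<le> p \<and> P i}) =
      card {i. x \<le> i \<and> i < y \<and> P i} + card {i. y \<le> i \<and> i \<le> p \<and> P i}"
    by (rule card_Un_disjoint) auto
  finally show ?thesis using c3 by simp
qed

lemma the_idx:
  fixes X :: "nat set"
  assumes "finite X" "a \<in> X"
  shows "(THE x. x \<in> X \<and> card {y\<in>X. y < x} = card {y\<in>X. y < a}) = a"
proof (rule the_equality)
  fix x assume x: "x \<in> X \<and> card {y\<in>X. y < x} = card {y\<in>X. y < a}"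
  show "x = a"
  proof (rule ccontr)
    assume "x \<noteq> a"
    then consider "x < a" | "a < x" by linarith
    then show False
    proof cases
      case 1
      have "{y\<in>X. y < x} \<subset> {y\<in>X. y < a}" using 1 x by auto
      then have "card {y\<in>X. y < x} < card {y\<in>X. y < a}" using assms by (intro psubset_card_mono) auto
      then show False using x by simp
    next
      case 2
      have "{y\<in>X. y < a} \<subset> {y\<in>X. y < x}" using 2 assms by auto
      then have "card {y\<in>X. y < a} < card {y\<in>X. y < x}" using assms by (intro psubset_card_mono) auto
      then show False using x by simp
    qed
  qed
qed (use assms in auto)

lemma idx_less:
  fixes X :: "nat set"
  assumes "finite X" "a \<in> X" shows "card {y\<in>X. y < a} < card X"
proof -
  have ne: "{y\<in>X. y < a} \<noteq> X"
  proof
    assume eq: "{y\<in>X. y < a} = X"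
    have "a \<in> {y\<in>X. y < a}" by (subst eq) (rule assms(2))
    then show False by simp
  qed
  have "{y\<in>X. y < a} \<subset> X" using ne by auto
  then show ?thesis by (rule psubset_card_mono[OF assms(1)])
qed

locale hs =
  fixes n w L b lam :: nat and A' :: "nat \<Rightarrow> nat"
  assumes n1: "1 \<le> n" and nw: "n < 2^w" and w16: "16 \<le> w"
    and L1: "1 \<le> L" and b1: "1 \<le> b" and bLw: "b * L \<le> w"
    and Ab: "\<And>i. A' i < 2^L"
    and fw: "L + 2*lam < w" and lamb: "b \<le> 2^lam"
    and lenb: "14 + (n div b + 1) + 2 * (2^(b*L) * b) + (n div b + 1) * (min b (2^L) div (w div (L + 2*lam)) + 1)
                + ((n div b) div 2^(L+lam) + 1) * 2^L \<le> n"
begin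

definition "e = L + lam"
definition "f = L + 2*lam"
definition "q = w div f"
definition "M = min b (2^L)"
definition "G = M div q + 1"
definition "nb = n div b + 1"
definition "ns = (n div b) div 2^e + 1"
definition "Y = (2::nat)^(b*L)"
definition "dig c t = c div 2^(t*L) mod 2^L"
definition "cw j = enc L (map (\<lambda>t. A' (j*b+t)) [0..<b])"
definition "locf c pos = card {t. t \<le> pos \<and> dig c t = dig c pos}"
definition "idxf c pos = card {x. x < dig c pos \<and> (\<exists>t<b. dig c t = x)}"
definition "X j = (\<lambda>t. A'(j*b+t)) ` {..<b}"
definition "sb j = j div 2^e * 2^e * b"
definition "BC j x = card {i. sb j \<le> i \<and> i < j*b \<and> A' i = x}"
definition "BPe j u = BC j (THE x. x \<in> X j \<and> card {y\<in>X j. y < x} = u)"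
definition "SPe S x = card {i. i < S * 2^e * b \<and> A' i = x}"
definition "CW = map cw [0..<nb]"
definition "T1 = concat (map (\<lambda>c. map (locf c) [0..<b]) [0..<Y])"
definition "T2 = concat (map (\<lambda>c. map (idxf c) [0..<b]) [0..<Y])"
definition "BP = concat (map (\<lambda>j. map (\<lambda>g. enc f (map (\<lambda>u. BPe j (g*q+u)) [0..<q])) [0..<G]) [0..<nb])"
definition "SP = concat (map (\<lambda>S. map (SPe S) [0..<2^L]) [0..<ns])"
definition "bT1 = 14 + nb"
definition "bT2 = bT1 + Y*b"
definition "bBP = bT2 + Y*b"
definition "bSP = bBP + nb*G"
definition "hdr = [1, b, 14, bT1, bT2, q, G, bBP, f, 2^f, L, 2^L, e, bSP]"
definition "mem = hdr @ (CW @ (T1 @ (T2 @ (BP @ SP))))"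

lemma lens: "length hdr = 14" "length CW = nb" "length T1 = Y*b" "length T2 = Y*b"
  "length BP = nb*G" "length SP = ns * 2^L"
  by (simp_all add: hdr_def CW_def T1_def T2_def BP_def SP_def concat_unif_len)

lemma len_mem: "length mem = 14 + nb + Y*b + Y*b + nb*G + ns*2^L"
  by (simp add: mem_def lens)

lemma len_mem_n: "length mem \<le> n"
  using lenb unfolding len_mem nb_def Y_def G_def M_def q_def f_def ns_def e_def by (simp add: mult.commute)

lemma f_pos: "0 < f" and q_pos: "0 < q" and qf: "q * f \<le> w"
  using L1 fw unfolding f_def q_def by (auto simp: div_times_less_eq_dividend div_greater_zero_iff)

lemma mem_hdr: "mem ! 0 = 1" "mem!1 = b" "mem!2 = 14" "mem!3 = bT1" "mem!4 = bT2" "mem!5 = q" "mem!6 = G"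
    "mem!7 = bBP" "mem!8 = f" "mem!9 = 2^f" "mem!10 = L" "mem!11 = 2^L" "mem!12 = e" "mem!13 = bSP"
  by (simp_all add: mem_def hdr_def)

lemma mem_CW: "j < nb \<Longrightarrow> mem ! (14 + j) = cw j"
  by (simp add: mem_def nth_append lens CW_def)

lemma mem_T1: "t < Y*b \<Longrightarrow> mem ! (bT1 + t) = T1 ! t"
  by (simp add: mem_def nth_append lens bT1_def)

lemma mem_T2: "t < Y*b \<Longrightarrow> mem ! (bT2 + t) = T2 ! t"
  by (simp add: mem_def nth_append lens bT1_def bT2_def)

lemma mem_BP: "t < nb*G \<Longrightarrow> mem ! (bBP + t) = BP ! t"
  by (simp add: mem_def nth_append lens bT1_def bT2_def bBP_def)

lemma mem_SP: "t < ns*2^L \<Longrightarrow> mem ! (bSP + t) = SP ! t"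
  by (simp add: mem_def nth_append lens bT1_def bT2_def bBP_def bSP_def)

lemma dig_cw: "t < b \<Longrightarrow> dig (cw j) t = A' (j*b+t)"
  unfolding dig_def cw_def by (subst enc_digit) (auto simp: Ab)

lemma cw_less: "cw j < Y"
proof -
  have "cw j < 2 ^ (L * length (map (\<lambda>t. A' (j*b+t)) [0..<b]))"
    unfolding cw_def by (rule enc_less) (auto simp: Ab)
  then show ?thesis unfolding Y_def by (simp add: mult.commute)
qed

lemma X_fin: "finite (X j)" unfolding X_def by simp

lemma card_X: "card (X j) \<le> M"
proof -
  have "card (X j) \<le> card {..<b}" unfolding X_def by (rule card_image_le) simp
  moreover have "card (X j) \<le> card {..<(2::nat)^L}"
    by (rule card_mono) (auto simp: X_def Ab)
  ultimately show ?thesis unfolding M_def by simp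
qed

lemma MGq: "M < G * q"
proof -
  have h1: "M = M div q * q + M mod q" by (rule div_mult_mod_eq[symmetric])
  have h2: "M mod q < q" using q_pos by simp
  have "M < M div q * q + q" using h1 h2 by linarith
  then show ?thesis unfolding G_def by (simp add: algebra_simps)
qed

lemma BC_less: "BC j x < 2^f"
proof -
  have "BC j x \<le> card {i. sb j \<le> i \<and> i < j*b}"
    unfolding BC_def by (rule card_mono) auto
  also have "{i. sb j \<le> i \<and> i < j*b} = {sb j..<j*b}" by auto
  also have "card {sb j..<j*b} = j*b - sb j" by simp
  also have "j*b - sb j = (j mod 2^e) * b"
  proof -
    have "j * b = (j div 2^e * 2^e + j mod 2^e) * b" by (simp only: div_mult_mod_eq)
    also have "\<dots> = sb j + (j mod 2^e) * b" unfolding sb_def by (rule add_mult_distrib)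
    finally show ?thesis by simp
  qed
  also have "(j mod 2^e) * b < 2^e * b" using b1 by simp
  also have "\<dots> \<le> 2^e * 2^lam" using lamb by simp
  also have "\<dots> = 2^f" unfolding e_def f_def by (simp add: power_add[symmetric])
  finally show ?thesis .
qed

lemma BPe_less: "BPe j u < 2^f" unfolding BPe_def by (rule BC_less)

theorem correct:
  assumes k: "1 \<le> k" "k \<le> n"
  shows "answers_within w mem Pr 60 k (card {i. i \<le> k - 1 \<and> A' i = A' (k-1)})"
proof -
  define p where "p = k - 1"
  define j where "j = p div b"
  define pos where "pos = p mod b"
  define c where "c = mem ! (14 + j)"
  define t where "t = c * b + pos"
  define loc where "loc = mem ! (bT1 + t)"
  define idx where "idx = mem ! (bT2 + t)"
  define ad where "ad = j * G + idx div q + bBP"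
  define bc where "bc = mem ! ad div 2 ^ (idx mod q * f) mod 2 ^ f"
  define a where "a = c div 2 ^ (pos * L) mod 2 ^ L"
  define sa where "sa = (j div 2 ^ e) * 2 ^ L + a + bSP"
  have pn: "p < n" using k unfolding p_def by simp
  have jnb: "j < nb" unfolding j_def nb_def using pn by (simp add: div_le_mono less_Suc_eq_le)
  have posb: "pos < b" unfolding pos_def using b1 by simp
  have pjb: "j * b + pos = p" unfolding j_def pos_def by simp
  have cc: "c = cw j" unfolding c_def using mem_CW[OF jnb] .
  have cY: "c < Y" unfolding cc by (rule cw_less)
  have tY: "t < Y * b"
  proof -
    have "t < (c + 1) * b" unfolding t_def using posb by simp
    also have "\<dots> \<le> Y * b" using cY by (intro mult_le_mono1) simp
    finally show ?thesis .
  qed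
  have tidx: "t = c * b + pos" by (rule t_def)
  have locv: "loc = locf c pos"
  proof -
    have "loc = T1 ! t" using loc_def mem_T1[OF tY] by simp
    then show ?thesis unfolding T1_def tidx using concat_unif_nth[OF cY posb] by simp
  qed
  have idxv0: "idx = idxf c pos"
  proof -
    have "idx = T2 ! t" using idx_def mem_T2[OF tY] by simp
    then show ?thesis unfolding T2_def tidx using concat_unif_nth[OF cY posb] by simp
  qed
  have av: "a = A' p" unfolding a_def using dig_cw[OF posb, of j] pjb by (simp add: dig_def cc)
  have aX: "a \<in> X j" unfolding X_def av using posb pjb by force
  have idxv: "idx = card {y\<in>X j. y < a}"
  proof -
    have "{x. x < dig c pos \<and> (\<exists>t<b. dig c t = x)} = {y\<in>X j. y < a}"
      unfolding X_def av using dig_cw pjb posb cc by (auto simp: dig_def)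
    then show ?thesis unfolding idxv0 idxf_def by simp
  qed
  have idxM: "idx < M" using idx_less[OF X_fin aX] card_X[of j] idxv by linarith
  have gG: "idx div q < G"
  proof -
    have "idx < G * q" using idxM MGq by simp
    then show ?thesis using q_pos by (simp add: div_less_iff_less_mult)
  qed
  have adlt: "j * G + idx div q < nb * G"
  proof -
    have "j * G + idx div q < (j + 1) * G" using gG by simp
    also have "\<dots> \<le> nb * G" using jnb by (intro mult_le_mono1) simp
    finally show ?thesis .
  qed
  have adm: "mem ! ad = enc f (map (\<lambda>u. BPe j (idx div q * q + u)) [0..<q])"
    unfolding ad_def using mem_BP[OF adlt] concat_unif_nth[OF jnb gG] by (simp add: BP_def add.commute)
  have bcv: "bc = BC j a"
  proof -
    have "bc = BPe j (idx div q * q + idx mod q)"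
      unfolding bc_def adm using q_pos by (subst enc_digit) (auto simp: BPe_less)
    also have "idx div q * q + idx mod q = idx" by simp
    finally show ?thesis unfolding BPe_def idxv using the_idx[OF X_fin aX] by simp
  qed
  have Sns: "j div 2^e < ns"
  proof -
    have "j \<le> n div b" using jnb unfolding nb_def by simp
    then show ?thesis unfolding ns_def by (simp add: div_le_mono less_Suc_eq_le)
  qed
  have aL: "a < 2^L" unfolding av by (rule Ab)
  have salt: "j div 2 ^ e * 2 ^ L + a < ns * 2^L"
  proof -
    have "j div 2 ^ e * 2 ^ L + a < (j div 2^e + 1) * 2^L" using aL by simp
    also have "\<dots> \<le> ns * 2^L" using Sns by (intro mult_le_mono1) simp
    finally show ?thesis .
  qed
  have sav: "mem ! sa = SPe (j div 2^e) a"
    unfolding sa_def using mem_SP[OF salt] concat_unif_nth[OF Sns aL] by (simp add: SP_def add.commute)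
  have locv2: "loc = card {t. t \<le> pos \<and> A' (j*b + t) = A' p}"
  proof -
    have "{t. t \<le> pos \<and> dig c t = dig c pos} = {t. t \<le> pos \<and> A' (j*b + t) = A' p}"
      using dig_cw posb pjb by (auto simp: cc)
    then show ?thesis unfolding locv locf_def by simp
  qed
  have sum: "mem ! sa + bc + loc = card {i. i \<le> p \<and> A' i = A' p}"
  proof -
    have x1: "sb j \<le> j * b" unfolding sb_def
      by (rule mult_le_mono1) (rule div_times_less_eq_dividend)
    have x2: "j * b \<le> p" using pjb by simp
    have "p - j*b = pos" using pjb by simp
    then have "card {i. i < sb j \<and> A' i = A' p} + card {i. sb j \<le> i \<and> i < j*b \<and> A' i = A' p}
       + card {t. t \<le> pos \<and> A' (j*b + t) = A' p} = card {i. i \<le> p \<and> A' i = A' p}"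
      using card_split3[OF x1 x2, of "\<lambda>i. A' i = A' p"] by simp
    moreover have "mem ! sa = card {i. i < sb j \<and> A' i = A' p}"
      unfolding sav SPe_def sb_def av ..
    moreover have "bc = card {i. sb j \<le> i \<and> i < j*b \<and> A' i = A' p}"
      unfolding bcv BC_def av ..
    ultimately show ?thesis using locv2 by simp
  qed
  have lm: "length mem < 2^w" using len_mem_n nw by simp
  have res: "answers_within w mem Pr 60 k (mem ! sa + bc + loc)"
  proof (rule prog_hier[OF p_def j_def pos_def _ t_def loc_def idx_def ad_def bc_def a_def sa_def])
    show "c = mem ! (14 + j)" by (rule c_def)
    show "1 \<le> k" "k < 2^w" using k nw by auto
    show "16 \<le> w" by (rule w16)
    show "mem ! 0 = 1" "mem!1 = b" "mem!2 = 14" "mem!3 = bT1" "mem!4 = bT2" "mem!5 = q" "mem!6 = G"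
      "mem!7 = bBP" "mem!8 = f" "mem!9 = 2^f" "mem!10 = L" "mem!11 = 2^L" "mem!12 = e" "mem!13 = bSP"
      by (rule mem_hdr)+
    show "14 \<le> length mem" "14 + j < length mem" "bT1 + t < length mem" "bT2 + t < length mem"
      "ad < length mem" "sa < length mem" "length mem \<le> 2^w"
      using jnb tY adlt salt lm mult.commute[of Y b]
      unfolding len_mem ad_def sa_def bSP_def bBP_def bT2_def bT1_def by linarith+
    have "card {i. i \<le> p \<and> A' i = A' p} \<le> card {..p}" by (rule card_mono) auto
    then show "mem ! sa + bc + loc < 2^w" using sum pn nw by simp
    have "idx mod q * f < q * f" using q_pos f_pos by simp
    then show "idx mod q * f < 2^w" using qf less_exp[of w] by linarith
    have "pos * L < b * L" using posb L1 by simp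
    then show "pos * L < 2^w" using bLw less_exp[of w] by linarith
  qed
  show ?thesis using res sum unfolding p_def by simp
qed


lemma words: "\<forall>x\<in>set mem. x < 2^w"
proof -
  have wl: "w < 2^w" by (rule less_exp)
  have w1: "w + 1 < 2^w"
  proof -
    have "w - 1 < 2^(w-1)" by (rule less_exp)
    moreover have "(2::nat)^w = 2 * 2^(w-1)" using w16 by (cases w) auto
    ultimately show ?thesis using w16 by linarith
  qed
  have lm: "length mem < 2^w" using len_mem_n nw by simp
  have bw: "b \<le> w" using bLw L1 by (metis le_trans mult_le_mono2 mult_1_right)
  have Lw: "L < w" using fw by simp
  have fw': "f < w" using fw unfolding f_def by simp
  have hd: "\<forall>x\<in>set hdr. x < 2^w"
  proof -
    have "bT1 \<le> length mem" "bT2 \<le> length mem" "bBP \<le> length mem" "bSP \<le> length mem"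
      unfolding len_mem bSP_def bBP_def bT2_def bT1_def by auto
    moreover have "q \<le> w" unfolding q_def by simp
    moreover have "G \<le> w + 1" unfolding G_def M_def using bw by (meson add_le_mono1 div_le_dividend le_trans min.cobounded1)
    moreover have "(2::nat)^f < 2^w" "(2::nat)^L < 2^w" using fw' Lw by simp_all
    moreover have "e < w" using fw unfolding e_def by simp
    moreover have "(14::nat) < 2^w"
    proof -
      have "(14::nat) < 2^4" by simp
      also have "\<dots> \<le> 2^w" using w16 by (intro power_increasing) auto
      finally show ?thesis .
    qed
    ultimately show ?thesis unfolding hdr_def using wl w1 lm bw fw' Lw by auto
  qed
  have cwl: "\<forall>x\<in>set CW. x < 2^w"
  proof
    fix x assume "x \<in> set CW"
    then obtain j where "x = cw j" unfolding CW_def by auto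
    moreover have "Y \<le> 2^w" unfolding Y_def using bLw by (intro power_increasing) auto
    ultimately show "x < 2^w" using cw_less[of j] by simp
  qed
  have t1: "\<forall>x\<in>set T1. x < 2^w" unfolding T1_def
  proof (rule concat_bound, intro allI impI)
    fix c pos :: nat assume "pos < b"
    moreover have "locf c pos \<le> card {..pos}" unfolding locf_def by (rule card_mono) auto
    moreover have "card {..pos} = Suc pos" by simp
    ultimately show "locf c pos < 2^w" using bw less_exp[of w] by linarith
  qed
  have t2: "\<forall>x\<in>set T2. x < 2^w" unfolding T2_def
  proof (rule concat_bound, intro allI impI)
    fix c pos :: nat
    have "idxf c pos \<le> card {..<dig c pos}" unfolding idxf_def by (rule card_mono) auto
    moreover have "dig c pos < 2^L" unfolding dig_def by simp
    moreover have "(2::nat)^L < 2^w" using Lw by simp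
    moreover have "card {..<dig c pos} = dig c pos" by simp
    ultimately show "idxf c pos < 2^w" by linarith
  qed
  have bp: "\<forall>x\<in>set BP. x < 2^w" unfolding BP_def
  proof (rule concat_bound, intro allI impI)
    fix j g :: nat
    have "enc f (map (\<lambda>u. BPe j (g*q+u)) [0..<q]) < 2 ^ (f * length (map (\<lambda>u. BPe j (g*q+u)) [0..<q]))"
      by (rule enc_less) (auto simp: BPe_less)
    also have "\<dots> \<le> 2^w" using qf by (intro power_increasing) (auto simp: mult.commute)
    finally show "enc f (map (\<lambda>u. BPe j (g*q+u)) [0..<q]) < 2^w" .
  qed
  have sp: "\<forall>x\<in>set SP. x < 2^w" unfolding SP_def
  proof (rule concat_bound, intro allI impI)
    fix S y :: nat assume xS: "S < ns"
    have c1: "SPe S y \<le> card {..<S * 2^e * b}" unfolding SPe_def by (rule card_mono) auto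
    have c2: "S * 2^e \<le> n div b"
    proof -
      have "S \<le> (n div b) div 2^e" using xS unfolding ns_def by simp
      then have "S * 2^e \<le> (n div b) div 2^e * 2^e" by (rule mult_le_mono1)
      also have "\<dots> \<le> n div b" by (rule div_times_less_eq_dividend)
      finally show ?thesis .
    qed
    have "S * 2^e * b \<le> n div b * b" using c2 by (rule mult_le_mono1)
    also have "\<dots> \<le> n" by (rule div_times_less_eq_dividend)
    finally have "S * 2^e * b \<le> n" .
    then show "SPe S y < 2^w" using c1 nw by simp
  qed
  show ?thesis using hd cwl t1 t2 bp sp unfolding mem_def by auto
qed

end

lemma sq_lt_pow: "5 \<le> v \<Longrightarrow> v^2 < (2::nat)^v"
proof (induction v rule: dec_induct)
  case base then show ?case by simp
next
  case (step v)
  have "(Suc v)^2 = v^2 + 2*v + 1" by (simp add: power2_eq_square)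
  also have "\<dots> < v^2 + v^2"
  proof -
    have "5 * v \<le> v * v" using step(1) by (intro mult_le_mono1)
    then show ?thesis using step(1) unfolding power2_eq_square by linarith
  qed
  also have "\<dots> < 2^v + 2^v" using step(3) by simp
  finally show ?case by simp
qed

lemma lin_lt_pow: "\<exists>V. \<forall>v\<ge>V. c * (v + 1) < (2::nat)^v"
proof (intro exI allI impI)
  fix v :: nat assume v: "c + 5 \<le> v"
  have "c * (v + 1) \<le> (v - 1) * (v + 1)" using v by (intro mult_le_mono1) simp
  also have "\<dots> < v^2" using v by (cases v) (auto simp: power2_eq_square)
  also have "\<dots> < 2^v" using v by (intro sq_lt_pow) simp
  finally show "c * (v + 1) < 2^v" .
qed

lemma exp_dom: "\<exists>W. \<forall>w\<ge>W. (2*(w+16))^k < (2::nat)^w"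
proof (cases "k = 0")
  case True
  have "\<forall>w\<ge>1. (1::nat) < 2^w"
  proof (intro allI impI)
    fix w :: nat assume "1 \<le> w"
    then have "(2::nat)^1 \<le> 2^w" by (intro power_increasing) auto
    then show "(1::nat) < 2^w" by simp
  qed
  then show ?thesis using True by (intro exI[of _ 1]) simp
next
  case False
  obtain V where V: "\<And>v. v \<ge> V \<Longrightarrow> (2*k+32) * (v + 1) < (2::nat)^v" using lin_lt_pow by blast
  show ?thesis
  proof (intro exI[of _ "k * V"] allI impI)
    fix w assume w: "k * V \<le> w"
    define v where "v = w div k"
    have vV: "V \<le> v" unfolding v_def using div_le_mono[OF w, of k] False by simp
    have wk: "w < k * (v + 1)" unfolding v_def using False
      by (simp add: dividend_less_times_div)
    have "2 * (w + 16) < 2 * (k * (v+1)) + 32" using wk by simp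
    also have "\<dots> \<le> (2*k+32) * (v+1)" by (simp add: algebra_simps)
    also have "\<dots> < 2^v" using V[OF vV] .
    finally have lt: "2 * (w + 16) < 2^v" .
    have "(2*(w+16))^k < (2^v)^k" using lt False by (intro power_strict_mono) auto
    also have "\<dots> = 2^(v*k)" by (simp add: power_mult)
    also have "\<dots> \<le> 2^w" unfolding v_def by (intro power_increasing) (auto simp: div_times_less_eq_dividend)
    finally show "(2*(w+16))^k < (2::nat)^w" .
  qed
qed

lemma sq_le_pow: "v^2 \<le> (2::nat)^(v+1)"
proof (cases "v \<ge> 5")
  case True then show ?thesis using sq_lt_pow[of v] by (simp add: less_imp_le)
next
  case False
  then have "v \<in> {0,1,2,3,4}" by auto
  then show ?thesis by auto
qed

lemma pow_gt_self: "x < (2::nat)^x" by (rule less_exp)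

lemma Mf_bound:
  fixes D L b w lam M :: nat
  assumes D1: "1 \<le> D" and L1: "1 \<le> L" and b1: "1 \<le> b" and w4: "w < 4*D*L*b" and bL: "b*L \<le> w"
    and lw: "2^lam < 2*w" and Mb: "M \<le> b" and hML: "M \<le> 2^L"
  shows "M*(L + 2*lam) \<le> (36*D+5)*L*b"
proof (cases "b \<le> 2^L")
  case True
  have "L < 2^L" by (rule pow_gt_self)
  have "(2::nat)^lam < 2*w" by (rule lw)
  also have "\<dots> < 2*(4*D*L*b)" using w4 by simp
  also have "\<dots> = 8*D*(L*b)" by simp
  also have "\<dots> \<le> 8*D*(2^L*2^L)"
  proof -
    have "L*b \<le> 2^L*2^L" using True \<open>L < 2^L\<close> by (intro mult_le_mono) auto
    then show ?thesis by (rule mult_le_mono2)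
  qed
  also have "\<dots> < 2^(8*D) * (2^L*2^L)" by (rule mult_strict_right_mono) (use pow_gt_self[of "8*D"] in auto)
  also have "\<dots> = 2^(8*D + (L + L))" by (simp only: power_add)
  also have "8*D + (L + L) = 8*D + 2*L" by simp
  finally have "(2::nat)^lam < 2^(8*D + 2*L)" .
  then have "lam < 8*D + 2*L" by (rule power_less_imp_less_exp[rotated]) simp
  moreover have "D \<le> D*L" using L1 by simp
  ultimately have "2*lam \<le> 16*(D*L) + 4*L" by linarith
  also have "\<dots> = (16*D + 4)*L" by (simp add: algebra_simps)
  finally have "2*lam \<le> (16*D + 4)*L" .
  then have "L + 2*lam \<le> (16*D+5)*L" by (simp add: algebra_simps)
  then have "M*(L + 2*lam) \<le> b*((16*D+5)*L)" using Mb by (intro mult_le_mono)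
  also have "\<dots> \<le> (36*D+5)*L*b" by (simp add: algebra_simps)
  finally show ?thesis .
next
  case False
  then have pL: "2^L < b" by simp
  have "2^L * L \<le> b * L" using pL by (intro mult_le_mono1) simp
  then have a1: "2^L * L \<le> w" using bL by (rule le_trans)
  have a2: "2^L * lam \<le> 2*w"
  proof (cases "lam \<le> 2*L")
    case True
    then have "2^L * lam \<le> 2^L * (2*L)" by (rule mult_le_mono2)
    also have "\<dots> = 2 * (2^L * L)" by simp
    finally show ?thesis using a1 by linarith
  next
    case False
    then have l2: "2*L + 1 \<le> lam" by simp
    have e1: "(2::nat)^(2*L) = (2^L)^2" by (subst mult.commute) (rule power_mult)
    have "(2^L * lam)^2 = 2^(2*L) * lam^2" unfolding e1 by (rule power_mult_distrib)
    also have "\<dots> \<le> 2^(lam - 1) * 2^(lam+1)"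
      by (rule mult_le_mono[OF power_increasing sq_le_pow]) (use l2 in auto)
    also have "\<dots> = 2^(lam - 1 + (lam + 1))" by (rule power_add[symmetric])
    also have "lam - 1 + (lam + 1) = lam * 2" using l2 by simp
    also have "(2::nat)^(lam * 2) = (2^lam)^2" by (rule power_mult)
    finally have "2^L * lam \<le> 2^lam" by (rule power2_le_imp_le) simp
    then show ?thesis using lw by simp
  qed
  have "M*(L + 2*lam) \<le> 2^L*(L + 2*lam)" using hML by (rule mult_le_mono1)
  also have "\<dots> = 2^L * L + 2*(2^L*lam)" by (simp add: algebra_simps)
  also have "\<dots> \<le> 5*w" using a1 a2 by simp
  also have "\<dots> \<le> 5*(4*D*L*b)" using w4 by simp
  also have "\<dots> \<le> (36*D+5)*L*b" by (simp add: algebra_simps)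
  finally show ?thesis .
qed

lemma params:
  fixes n w D L :: nat
  assumes D1: "1 \<le> D" and L1: "1 \<le> L" and n1: "1 \<le> n" and pw: "2^w \<le> (n+1)^D"
    and reg: "16*D*L \<le> w" and W1: "(2*(w+16))^(6*D) < 2^w" and W2: "(2*(w+16))^16 < 2^w"
    and w16: "16 \<le> w"
  defines "b \<equiv> w div (2*D*L)" and "lam \<equiv> ceillog2 w"
  shows "8 \<le> b" "b * L \<le> w" "L + 2*lam < w" "b \<le> 2^lam"
   "14 + (n div b + 1) + 2 * (2^(b*L) * b) + (n div b + 1) * (min b (2^L) div (w div (L + 2*lam)) + 1)
      + ((n div b) div 2^(L+lam) + 1) * 2^L \<le> n"
   "(14 + (n div b + 1) + 2 * (2^(b*L) * b) + (n div b + 1) * (min b (2^L) div (w div (L + 2*lam)) + 1)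
      + ((n div b) div 2^(L+lam) + 1) * 2^L) * w \<le> (80*D + 20) * L * n"
proof -
  define k where "k = 2*D*L"
  have k1: "1 \<le> k" unfolding k_def using D1 L1 by simp
  have s1: "b * k \<le> w" unfolding b_def k_def by (rule div_times_less_eq_dividend)
  have s2: "w < (b+1) * k" unfolding b_def k_def using k1 k_def
    by (simp add: dividend_less_div_times)
  have b8: "8 \<le> b"
  proof -
    have "(16*D*L) div k = 8" unfolding k_def using D1 L1 by simp
    moreover have "(16*D*L) div k \<le> w div k" using reg by (rule div_le_mono)
    ultimately show ?thesis unfolding b_def k_def by simp
  qed
  show "8 \<le> b" by (rule b8)
  have bk: "b * L \<le> b * k" unfolding k_def using D1 by simp
  show bLw: "b * L \<le> w" using bk s1 by linarith
  have w4: "w < 4*D*L*b"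
  proof -
    have "(b+1)*k \<le> (2*b)*k" using b8 by (intro mult_le_mono1) simp
    then have "w < (2*b)*k" using s2 by linarith
    moreover have "(2*b)*k = 4*D*L*b" unfolding k_def by (simp add: algebra_simps)
    ultimately show ?thesis by simp
  qed
  define P where "P = D*(b*L)"
  have w3: "w \<le> 3*P"
  proof -
    have "8*(D*L) \<le> b*(D*L)" using b8 by (rule mult_le_mono1)
    have e1: "(b+1)*k = 2*P + 2*(D*L)" unfolding k_def P_def by (simp add: algebra_simps)
    have e2: "b*(D*L) = P" unfolding P_def by (simp add: algebra_simps)
    show ?thesis using s2 e1 e2 \<open>8*(D*L) \<le> b*(D*L)\<close> by linarith
  qed
  define Y where "Y = (2::nat)^(b*L)"
  have Y1: "1 \<le> Y" unfolding Y_def by simp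
  have Y2: "Y*Y \<le> n+1"
  proof -
    have "2*(b*L)*D \<le> w" using s1 unfolding k_def by (simp add: algebra_simps)
    then have "(2::nat)^(2*(b*L)*D) \<le> 2^w" by (intro power_increasing) auto
    also have "(2::nat)^(2*(b*L)*D) = (2^(2*(b*L)))^D" by (rule power_mult)
    also have "(2::nat)^(2*(b*L)) = Y*Y" unfolding Y_def mult_2 by (rule power_add)
    finally have "(Y*Y)^D \<le> (n+1)^D" using pw by linarith
    moreover have "D = Suc (D - 1)" using D1 by simp
    ultimately have "(Y*Y)^Suc (D-1) \<le> (n+1)^Suc (D-1)" by simp
    then show ?thesis by (rule power_le_imp_le_base) simp
  qed
  have Yp: "2^w \<le> Y^(3*D)"
  proof -
    have "(2::nat)^w \<le> 2^(3*P)" using w3 by (intro power_increasing) auto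
    also have "3*P = (b*L)*(3*D)" unfolding P_def by (simp add: algebra_simps)
    also have "(2::nat)^((b*L)*(3*D)) = Y^(3*D)" unfolding Y_def by (rule power_mult)
    finally show ?thesis .
  qed
  define Z where "Z = 2*(w+16)^2"
  have YZ: "Z \<le> Y"
  proof (rule ccontr)
    assume "\<not> Z \<le> Y"
    then have "Y < Z" by simp
    then have "Y^(3*D) < Z^(3*D)" using D1 by (intro power_strict_mono) auto
    also have "Z \<le> (2*(w+16))^2"
    proof -
      have "(2*(w+16))^2 = 4*(w+16)^2" by (simp only: power_mult_distrib) simp
      then show ?thesis unfolding Z_def by simp
    qed
    then have "Z^(3*D) \<le> ((2*(w+16))^2)^(3*D)" by (rule power_mono) simp
    also have "((2*(w+16))^2)^(3*D) = (2*(w+16))^(6*D)" by (simp add: power_mult[symmetric])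
    finally show False using W1 Yp by linarith
  qed
  have Zb: "64*w + 512 \<le> Z" "2*(w*w) \<le> Z" unfolding Z_def by (simp_all add: power2_eq_square algebra_simps)
  have nZY: "Z*Y \<le> n+1"
  proof -
    have "Z*Y \<le> Y*Y" using YZ by (rule mult_le_mono1)
    then show ?thesis using Y2 by linarith
  qed
  have wY: "w \<le> Y" using YZ Zb by linarith
  have w0: "0 < w" using w16 by simp
  have lw1: "w \<le> 2^lam" unfolding lam_def by (rule le_two_power_ceillog2)
  have lw2: "2^lam < 2*w" unfolding lam_def using w0 by (rule two_power_ceillog2_gt)
  have l16: "16*lam < w"
  proof -
    have "(2::nat)^(16*lam) = (2^lam)^16" by (simp add: power_mult[symmetric] mult.commute)
    also have "\<dots> < (2*w)^16" using lw2 by (intro power_strict_mono) auto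
    also have "\<dots> \<le> (2*(w+16))^16" by (intro power_mono) auto
    also have "\<dots> < 2^w" by (rule W2)
    finally show ?thesis by (rule power_less_imp_less_exp[rotated]) simp
  qed
  have L16: "16*L \<le> w" using reg D1 by (metis le_trans mult_le_mono1 mult_le_mono2 nat_mult_1_right mult.commute)
  show "L + 2*lam < w" using l16 L16 by linarith
  show "b \<le> 2^lam" using bLw L1 lw1 by (metis le_trans mult_le_mono2 nat_mult_1_right)
  define x where "x = n div b"
  define M where "M = min b ((2::nat)^L)"
  define f where "f = L + 2*lam"
  define q where "q = w div f"
  define g where "g = M div q"
  define e where "e = L + lam"
  define h where "h = (x div 2^e) * 2^L"
  define T where "T = 14 + (n div b + 1) + 2 * (2^(b*L) * b) + (n div b + 1) * (min b (2^L) div (w div (L + 2*lam)) + 1)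
      + ((n div b) div 2^(L+lam) + 1) * 2^L"
  have Tdef: "T = 14 + (x + 1) + 2 * (Y * b) + (x + 1) * (g + 1) + h + 2^L"
    unfolding T_def x_def Y_def g_def M_def q_def f_def h_def e_def by (simp add: algebra_simps)
  have bw: "b \<le> w" using bLw L1 by (metis le_trans mult_le_mono2 nat_mult_1_right)
  have xb: "x * b \<le> n" unfolding x_def by (rule div_times_less_eq_dividend)
  have x8: "8 * x \<le> n" using xb b8 by (metis le_trans mult_le_mono1 mult.commute)
  have Mb: "M \<le> b" and hML: "M \<le> 2^L" unfolding M_def by simp_all
  have LY: "(2::nat)^L \<le> Y" unfolding Y_def using b8 by (intro power_increasing) auto
  have f1: "1 \<le> f" unfolding f_def using L1 by simp
  have "4*L + 8*lam \<le> w" using l16 L16 by linarith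
  then have f4: "4 * f \<le> w" unfolding f_def by simp
  have fw: "f \<le> w" using f4 by simp
  have q4: "4 \<le> q"
  proof -
    have "(4*f) div f \<le> w div f" using f4 by (rule div_le_mono)
    then show ?thesis unfolding q_def using f1 by simp
  qed
  have wq: "w < 2 * q * f"
  proof -
    have "w < (q + 1) * f" unfolding q_def using f1 by (simp add: dividend_less_div_times)
    also have "\<dots> \<le> 2 * q * f" using q4 by (intro mult_le_mono1) simp
    finally show ?thesis .
  qed
  have gq: "g * q \<le> M" unfolding g_def by (rule div_times_less_eq_dividend)
  have g4: "4 * g \<le> M" using gq q4 by (metis le_trans mult_le_mono2 mult.commute)
  have xg: "4 * (x * g) \<le> n"
  proof -
    have "x * (4 * g) \<le> x * b" using g4 Mb by (intro mult_le_mono2) simp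
    moreover have "4 * (x * g) = x * (4 * g)" by simp
    ultimately show ?thesis using xb by linarith
  qed
  have hx: "h \<le> x"
  proof -
    have "(2::nat)^L \<le> 2^e" unfolding e_def by (intro power_increasing) auto
    then have "h \<le> (x div 2^e) * 2^e" unfolding h_def by (rule mult_le_mono2)
    also have "\<dots> \<le> x" by (rule div_times_less_eq_dividend)
    finally show ?thesis .
  qed
  define WY where "WY = w * Y"
  define WWY where "WWY = w * w * Y"
  define YB where "YB = Y * b"
  have ZY: "Z * Y = 2 * WWY + 64 * WY + 512 * Y" unfolding Z_def WWY_def WY_def
    by (simp add: power2_eq_square algebra_simps)
  have YBle: "YB \<le> WY" unfolding YB_def WY_def using bw by (simp add: mult.commute)
  have WYw: "w \<le> WY" unfolding WY_def using Y1 by simp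
  have WWYw: "w * w \<le> WWY" unfolding WWY_def using Y1 by simp
  define XG where "XG = x * g"
  have Tdef2: "T = 14 + (x + 1) + 2 * YB + (XG + x + g + 1) + h + 2^L"
    unfolding Tdef YB_def XG_def by (simp add: algebra_simps)
  have xg2: "4 * XG \<le> n" using xg unfolding XG_def .
  have main_len: "T \<le> n" unfolding Tdef2 using x8 xg2 g4 Mb hx LY YBle ZY nZY WYw Y1 bw wY by linarith
  show "14 + (n div b + 1) + 2 * (2^(b*L) * b) + (n div b + 1) * (min b (2^L) div (w div (L + 2*lam)) + 1)
      + ((n div b) div 2^(L+lam) + 1) * 2^L \<le> n" using main_len unfolding T_def .
  define K where "K = 36*D + 5"
  have MfK: "M * f \<le> K * L * b" unfolding K_def f_def
    by (rule Mf_bound[OF D1 L1 _ w4 bLw lw2 Mb hML]) (use b8 in simp)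
  define XW where "XW = x * w"
  define GW where "GW = g * w"
  define XGW where "XGW = x * GW"
  define HW where "HW = h * w"
  define LW where "LW = 2^L * w"
  define YBW where "YBW = YB * w"
  define DLn where "DLn = D * L * n"
  define Ln where "Ln = L * n"
  have Tw: "T * w = 14 * w + (XW + w) + 2 * YBW + (XGW + GW + XW + w) + HW + LW"
    unfolding Tdef XW_def GW_def XGW_def HW_def LW_def YBW_def YB_def by (simp add: algebra_simps)
  have i2: "XW \<le> 4 * DLn"
  proof -
    have "x * w \<le> x * (4*D*L*b)" using w4 by (intro mult_le_mono2) simp
    also have "\<dots> = 4*(D*L)*(x*b)" by (simp add: algebra_simps)
    also have "\<dots> \<le> 4*(D*L)*n" using xb by (intro mult_le_mono2)
    finally show ?thesis unfolding XW_def DLn_def by (simp add: algebra_simps)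
  qed
  have i3: "YBW \<le> WWY" unfolding YBW_def YB_def WWY_def using bw by (simp add: algebra_simps)
  have GW2: "GW \<le> 2 * (M * f)"
  proof -
    have "g * w \<le> g * (2 * q * f)" using wq by (intro mult_le_mono2) simp
    also have "\<dots> = 2 * f * (g * q)" by (simp add: algebra_simps)
    also have "\<dots> \<le> 2 * f * M" using gq by (intro mult_le_mono2)
    finally show ?thesis unfolding GW_def by (simp add: algebra_simps)
  qed
  have XGW2: "XGW \<le> 2 * K * Ln"
  proof -
    have "x * GW \<le> x * (2 * (K * L * b))" using GW2 MfK by (intro mult_le_mono2) simp
    also have "\<dots> = 2*(K*L)*(x*b)" by (simp add: algebra_simps)
    also have "\<dots> \<le> 2*(K*L)*n" using xb by (intro mult_le_mono2)
    finally show ?thesis unfolding XGW_def Ln_def by (simp add: algebra_simps)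
  qed
  have Mf2: "M * f \<le> w * w" using Mb bw fw by (intro mult_le_mono) auto
  have HW2: "HW \<le> n"
  proof -
    have "(2::nat)^L * w \<le> 2^L * 2^lam" using lw1 by (rule mult_le_mono2)
    also have "\<dots> = 2^e" unfolding e_def by (simp add: power_add)
    finally have "h * w \<le> (x div 2^e) * 2^e" unfolding h_def by (simp add: mult.assoc mult_le_mono2)
    also have "\<dots> \<le> x" by (rule div_times_less_eq_dividend)
    finally show ?thesis unfolding HW_def using x8 by linarith
  qed
  have LW2: "LW \<le> WY" unfolding LW_def WY_def using LY by (simp add: mult.commute)
  have nLn: "n \<le> Ln" unfolding Ln_def using L1 by simp
  have DLn: "Ln \<le> DLn" unfolding Ln_def DLn_def using D1 by simp
  have final: "T * w \<le> (80*D + 20) * L * n"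
  proof -
    have dl: "D * Ln = DLn" unfolding DLn_def Ln_def by simp
    have XGW3: "XGW \<le> 72 * DLn + 10 * Ln"
    proof -
      have "2 * K * Ln = 72 * (D * Ln) + 10 * Ln" unfolding K_def by (simp add: algebra_simps)
      then show ?thesis using XGW2 dl by linarith
    qed
    have "T * w \<le> 80 * DLn + 20 * Ln"
      unfolding Tw using i2 i3 GW2 XGW3 Mf2 HW2 LW2 nLn ZY nZY WYw WWYw Y1 by linarith
    also have "\<dots> = (80*D + 20) * L * n" unfolding DLn_def Ln_def by (simp add: algebra_simps)
    finally show ?thesis .
  qed
  show "(14 + (n div b + 1) + 2 * (2^(b*L) * b) + (n div b + 1) * (min b (2^L) div (w div (L + 2*lam)) + 1)
      + ((n div b) div 2^(L+lam) + 1) * 2^L) * w \<le> (80*D + 20) * L * n"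
    using final unfolding T_def .
qed

lemma arank_le: "arank A k \<le> k"
proof -
  have "arank A k \<le> card {1..k}" unfolding arank_def by (rule card_mono) auto
  then show ?thesis by simp
qed

lemma pow_bound:
  assumes "real w \<le> real D * log 2 (real n + 1)"
  shows "2^w \<le> (n+1)^D"
proof -
  have "(2::real) powr (real w) \<le> 2 powr (real D * log 2 (real n + 1))"
    by (rule powr_mono) (use assms in auto)
  also have "\<dots> = (2 powr (log 2 (real n + 1))) powr real D" by (simp only: powr_powr mult.commute)
  also have "2 powr (log 2 (real n + 1)) = real n + 1" by simp
  also have "(real n + 1) powr real D = (real n + 1)^D" by (simp add: powr_realpow)
  finally have "real (2^w) \<le> real ((n+1)^D)" by (simp add: powr_realpow add.commute)
  then show ?thesis by linarith
qed

lemma sigma_bound: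
  assumes "x < \<sigma>"
  shows "x < 2 ^ max 1 (nat \<lceil>log 2 (real \<sigma>)\<rceil>)"
proof -
  have s0: "\<sigma> \<noteq> 0" using assms by simp
  have "\<sigma> \<le> 2 ^ ceillog2 \<sigma>" by (rule le_two_power_ceillog2)
  also have "ceillog2 \<sigma> = nat \<lceil>log 2 (real \<sigma>)\<rceil>" unfolding ceillog2_def using s0 by simp
  also have "(2::nat) ^ nat \<lceil>log 2 (real \<sigma>)\<rceil> \<le> 2 ^ max 1 (nat \<lceil>log 2 (real \<sigma>)\<rceil>)"
    by (intro power_increasing) auto
  finally show ?thesis using assms by simp
qed

lemma arank_shift:
  fixes A :: "nat \<Rightarrow> nat"
  assumes "1 \<le> k" "k \<le> n"
  defines "A' \<equiv> \<lambda>i. if i < n then A (Suc i) else 0"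
  shows "card {i. i \<le> k - 1 \<and> A' i = A' (k-1)} = arank A k"
proof -
  have "{i. 1 \<le> i \<and> i \<le> k \<and> A i = A k} = Suc ` {i. i \<le> k - 1 \<and> A' i = A' (k-1)}"
  proof (rule set_eqI, rule iffI)
    fix i assume i: "i \<in> {i. 1 \<le> i \<and> i \<le> k \<and> A i = A k}"
    then show "i \<in> Suc ` {i. i \<le> k - 1 \<and> A' i = A' (k-1)}"
      using assms(1,2) by (intro image_eqI[of _ _ "i - 1"]) (auto simp: A'_def)
  next
    fix i assume "i \<in> Suc ` {i. i \<le> k - 1 \<and> A' i = A' (k-1)}"
    then obtain j where j: "i = Suc j" "j \<le> k - 1" "A' j = A' (k-1)" by blast
    have "j < n" "k - 1 < n" using j assms by auto
    then show "i \<in> {i. 1 \<le> i \<and> i \<le> k \<and> A i = A k}" using j assms(1) by (auto simp: A'_def)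
  qed
  then show ?thesis unfolding arank_def by (simp add: card_image)
qed

theorem lemma3:
  "\<forall>D::nat. \<exists>(C::nat) (c::nat) (P::instr list).
     \<forall>(n::nat) (\<sigma>::nat) (w::nat) (A::nat \<Rightarrow> nat).
       (\<forall>i\<in>{1..n}. A i < \<sigma>) \<and>
       n < 2 ^ w \<and> real w \<le> real D * log 2 (real n + 1)
       \<longrightarrow> (\<exists>m::nat list.
              (\<forall>x\<in>set m. x < 2 ^ w) \<and>
              length m * w \<le> C * n * max 1 (nat \<lceil>log 2 (real \<sigma>)\<rceil>) \<and>
              (\<forall>k\<in>{1..n}. answers_within w m P c k (arank A k)))"
proof (intro allI)
  fix D :: nat
  obtain W1 where W1: "\<And>w. w \<ge> W1 \<Longrightarrow> (2*(w+16))^(6*D) < (2::nat)^w" using exp_dom by blast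
  obtain W2 where W2: "\<And>w. w \<ge> W2 \<Longrightarrow> (2*(w+16))^16 < (2::nat)^w" using exp_dom by blast
  define W0 where "W0 = max 16 (max W1 W2)"
  define C where "C = 2*(W0 + 16*D) + 80*D + 20"
  show "\<exists>(C::nat) (c::nat) (P::instr list).
     \<forall>(n::nat) (\<sigma>::nat) (w::nat) (A::nat \<Rightarrow> nat).
       (\<forall>i\<in>{1..n}. A i < \<sigma>) \<and>
       n < 2 ^ w \<and> real w \<le> real D * log 2 (real n + 1)
       \<longrightarrow> (\<exists>m::nat list.
              (\<forall>x\<in>set m. x < 2 ^ w) \<and>
              length m * w \<le> C * n * max 1 (nat \<lceil>log 2 (real \<sigma>)\<rceil>) \<and>
              (\<forall>k\<in>{1..n}. answers_within w m P c k (arank A k)))"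
  proof (rule exI[of _ C], rule exI[of _ "60::nat"], rule exI[of _ Pr], intro allI impI)
    fix n \<sigma> w :: nat and A :: "nat \<Rightarrow> nat"
    assume H: "(\<forall>i\<in>{1..n}. A i < \<sigma>) \<and> n < 2 ^ w \<and> real w \<le> real D * log 2 (real n + 1)"
    define L where "L = max 1 (nat \<lceil>log 2 (real \<sigma>)\<rceil>)"
    have nw: "n < 2^w" using H by simp
    show "\<exists>m::nat list. (\<forall>x\<in>set m. x < 2 ^ w) \<and>
              length m * w \<le> C * n * max 1 (nat \<lceil>log 2 (real \<sigma>)\<rceil>) \<and>
              (\<forall>k\<in>{1..n}. answers_within w m Pr 60 k (arank A k))"
    proof (cases "n = 0")
      case True
      then show ?thesis by (intro exI[of _ "[]"]) simp
    next
      case False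
      then have n1: "1 \<le> n" by simp
      have pw: "2^w \<le> (n+1)^D" using H by (intro pow_bound) simp
      have L1: "1 \<le> L" unfolding L_def by simp
      have Ab: "\<And>i. i \<in> {1..n} \<Longrightarrow> A i < 2^L" unfolding L_def using H sigma_bound by blast
      have D1: "1 \<le> D"
      proof (rule ccontr)
        assume "\<not> 1 \<le> D"
        then have "D = 0" by simp
        then have "w = 0" using H by simp
        then show False using nw n1 by simp
      qed
      show ?thesis
      proof (cases "w < W0 \<or> w < 16*D*L")
        case True
        define m where "m = 0 # map (arank A) [1..<n+1]"
        have lm: "length m = n + 1" unfolding m_def by simp
        have mk: "m ! k = arank A k" if "1 \<le> k" "k \<le> n" for k
          using that unfolding m_def by (cases k) (auto simp del: upt_Suc)
        have words: "\<forall>x\<in>set m. x < 2^w"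
        proof
          fix x assume "x \<in> set m"
          then have "x = 0 \<or> (\<exists>k\<in>{1..n}. x = arank A k)" unfolding m_def by auto
          then show "x < 2^w" using arank_le nw
            by (metis atLeastAtMost_iff le_less_trans zero_less_power zero_less_numeral le_trans)
        qed
        have wb: "w \<le> (W0 + 16*D) * L"
        proof -
          have "W0 \<le> W0 * L" using L1 by simp
          moreover have "(W0 + 16*D) * L = W0 * L + 16*D*L" by (simp add: algebra_simps)
          ultimately show ?thesis using True by linarith
        qed
        have sp: "length m * w \<le> C * n * L"
        proof -
          have "length m * w \<le> (2*n) * ((W0 + 16*D) * L)" unfolding lm using n1 wb by (intro mult_le_mono) auto
          also have "\<dots> = (2*(W0 + 16*D)) * n * L" by (simp add: algebra_simps)
          also have "\<dots> \<le> C * n * L" unfolding C_def by (intro mult_le_mono1) simp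
          finally show ?thesis .
        qed
        have ans: "\<forall>k\<in>{1..n}. answers_within w m Pr 60 k (arank A k)"
        proof
          fix k assume k: "k \<in> {1..n}"
          have "answers_within w m Pr 60 k (m ! k)"
            by (rule prog_direct) (use k lm in \<open>auto simp: m_def\<close>)
          then show "answers_within w m Pr 60 k (arank A k)" using mk k by simp
        qed
        show ?thesis using words sp ans unfolding L_def by blast
      next
        case False
        then have wW: "W0 \<le> w" and reg: "16*D*L \<le> w" by auto
        have w16: "16 \<le> w" using wW unfolding W0_def by simp
        have W1w: "(2*(w+16))^(6*D) < (2::nat)^w" using W1 wW unfolding W0_def by simp
        have W2w: "(2*(w+16))^16 < (2::nat)^w" using W2 wW unfolding W0_def by simp
        define b where "b = w div (2*D*L)"
        define lam where "lam = ceillog2 w"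
        define A' where "A' = (\<lambda>i. if i < n then A (Suc i) else 0)"
        note pr = params[OF D1 L1 n1 pw reg W1w W2w w16, folded b_def lam_def]
        have Ab': "\<And>i. A' i < 2^L" unfolding A'_def using Ab by auto
        interpret hs n w L b lam A'
          by unfold_locales (use n1 nw w16 L1 pr Ab' in auto)
        have lmem: "length mem = 14 + (n div b + 1) + 2 * (2^(b*L) * b) + (n div b + 1) * (min b (2^L) div (w div (L + 2*lam)) + 1)
                + ((n div b) div 2^(L+lam) + 1) * 2^L"
          unfolding len_mem nb_def Y_def G_def M_def q_def f_def ns_def e_def by (simp add: algebra_simps)
        have sp: "length mem * w \<le> C * n * L"
        proof -
          have "length mem * w \<le> (80*D + 20) * L * n" unfolding lmem by (rule pr(6))
          also have "\<dots> \<le> C * n * L" unfolding C_def by (simp add: algebra_simps)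
          finally show ?thesis .
        qed
        have ans: "\<forall>k\<in>{1..n}. answers_within w mem Pr 60 k (arank A k)"
        proof
          fix k assume k: "k \<in> {1..n}"
          then have "answers_within w mem Pr 60 k (card {i. i \<le> k - 1 \<and> A' i = A' (k-1)})"
            by (intro correct) auto
          then show "answers_within w mem Pr 60 k (arank A k)"
            using arank_shift[of k n A] k unfolding A'_def by simp
        qed
        show ?thesis using words sp ans unfolding L_def by blast
      qed
    qed
  qed
qed

end
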